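(* Let $m\geq 0$, let $g\in\mathbb{Z}[x_1,\dots,x_n]^{\Sigma_n}$ be a symmetric polynomial and let $0\leq r\leq n$. Then $$C_{m+1}(g\,s(1^r))=C_{m+1}\bigl(C_m(g)\,s(1^r)\bigr).$$
   Context: For a partition $\lambda$ with at most $n$ parts, $s(\lambda)$ denotes the Schur polynomial in $x_1,\dots,x_n$; these form a $\mathbb{Z}$-basis of the ring of symmetric polynomials. $1^r$ denotes the partition $(1,\dots,1)$ with $r$ parts. For an integer $m\geq0$, a partition $\lambda=(\lambda_1,\lambda_2,\dots)$ is $m$-adapted if $\lambda_i>m-i$ for every $i\geq1$ with $\lambda_i>0$. $C_m$ is the additive endomorphism of the ring of symmetric polynomials with $C_m(s(\lambda))=s(\lambda)$ if $\lambda$ is $m$-adapted and $C_m(s(\lambda))=0$ otherwise. *)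

theory Defs
  imports "HOL-Library.Poly_Mapping" "HOL-Combinatorics.Permutations"
begin

text \<open>Polynomials with integer coefficients in the variables x_0, x_1, ...
  (variable x_i of the paper is index i-1 here): a polynomial is a finitely
  supported map from exponent vectors (monomials) to coefficients.\<close>

type_synonym ipoly = "(nat \<Rightarrow>\<^sub>0 nat) \<Rightarrow>\<^sub>0 int"

definition symmetric_poly :: "nat \<Rightarrow> ipoly \<Rightarrow> bool" where
  "symmetric_poly n p \<longleftrightarrow>
     (\<forall>\<alpha>\<in>Poly_Mapping.keys p. Poly_Mapping.keys \<alpha> \<subseteq> {..<n}) \<and>
     (\<forall>\<sigma>. \<sigma> permutes {..<n} \<longrightarrow>
        (\<forall>\<alpha>. Poly_Mapping.lookup p (Poly_Mapping.map_key \<sigma> \<alpha>) = Poly_Mapping.lookup p \<alpha>))"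

definition partition :: "nat list \<Rightarrow> bool" where
  "partition la \<longleftrightarrow> sorted_wrt (\<ge>) la \<and> 0 \<notin> set la"

definition cells :: "nat list \<Rightarrow> (nat \<times> nat) set" where
  "cells la = {(i, j). i < length la \<and> j < la ! i}"

text \<open>Semistandard Young tableaux of shape lambda with entries in {0..<n}
  (entry k stands for the variable x_k); a tableau is a filling of the
  cells, extended by 0 outside the diagram.\<close>
definition ssyt :: "nat \<Rightarrow> nat list \<Rightarrow> (nat \<times> nat \<Rightarrow> nat) set" where
  "ssyt n la = {T.
     (\<forall>c\<in>cells la. T c < n) \<and>
     (\<forall>c. c \<notin> cells la \<longrightarrow> T c = 0) \<and>
     (\<forall>i j. (i, Suc j) \<in> cells la \<longrightarrow> T (i, j) \<le> T (i, Suc j)) \<and>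
     (\<forall>i j. (Suc i, j) \<in> cells la \<longrightarrow> T (i, j) < T (Suc i, j))}"

definition tableau_content :: "nat list \<Rightarrow> (nat \<times> nat \<Rightarrow> nat) \<Rightarrow> (nat \<Rightarrow>\<^sub>0 nat)" where
  "tableau_content la T = Abs_poly_mapping (\<lambda>k. card {c \<in> cells la. T c = k})"

definition schur :: "nat \<Rightarrow> nat list \<Rightarrow> ipoly" where
  "schur n la = (\<Sum>T\<in>ssyt n la. Poly_Mapping.single (tableau_content la T) 1)"

definition partitions_le :: "nat \<Rightarrow> nat list set" where
  "partitions_le n = {la. partition la \<and> length la \<le> n}"

definition schur_coeffs :: "nat \<Rightarrow> ipoly \<Rightarrow> nat list \<Rightarrow> int" where
  "schur_coeffs n g = (THE c. finite {la. c la \<noteq> 0} \<and>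
      (\<forall>la. c la \<noteq> 0 \<longrightarrow> la \<in> partitions_le n) \<and>
      g = (\<Sum>la\<in>{la. c la \<noteq> 0}. of_int (c la) * schur n la))"

text \<open>m-adapted partitions (paper indexes parts from 1: part i+1 is lambda!i).\<close>
definition adapted :: "nat \<Rightarrow> nat list \<Rightarrow> bool" where
  "adapted m la \<longleftrightarrow> (\<forall>i<length la. int (la ! i) > int m - int (i + 1))"

definition C_op :: "nat \<Rightarrow> nat \<Rightarrow> ipoly \<Rightarrow> ipoly" where
  "C_op n m g = (\<Sum>la\<in>{la. schur_coeffs n g la \<noteq> 0 \<and> adapted m la}.
                   of_int (schur_coeffs n g la) * schur n la)"

end

theory Submission
  imports Defs
begin


lemma cells_iff: "(i, j) \<in> cells la \<longleftrightarrow> i < length la \<and> j < la ! i"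
  by (simp add: cells_def)

lemma finite_cells: "finite (cells la)"
proof -
  have "cells la \<subseteq> {..<length la} \<times> {..<Max (set la)}"
  proof
    fix c assume "c \<in> cells la"
    then obtain i j where c: "c = (i, j)" "i < length la" "j < la ! i" by (auto simp: cells_def)
    then have m: "la ! i \<le> Max (set la)" by (intro Max_ge) auto
    have "j < Max (set la)" using c(3) m by linarith
    then show "c \<in> {..<length la} \<times> {..<Max (set la)}" using c by simp
  qed
  then show ?thesis by (rule finite_subset) auto
qed

lemma young:
  assumes "sorted_wrt (\<ge>) la" "(i, j) \<in> cells la" "i' \<le> i" "j' \<le> j"
  shows "(i', j') \<in> cells la"
proof -
  have "la ! i \<le> la ! i'"
    using assms by (cases "i' = i") (auto simp: cells_iff intro: sorted_wrt_nth_less[OF assms(1)])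
  then show ?thesis using assms by (auto simp: cells_iff)
qed

lemma ssytD:
  assumes "T \<in> ssyt n la"
  shows "\<And>c. c \<in> cells la \<Longrightarrow> T c < n"
    and "\<And>c. c \<notin> cells la \<Longrightarrow> T c = 0"
    and "\<And>i j. (i, Suc j) \<in> cells la \<Longrightarrow> T (i, j) \<le> T (i, Suc j)"
    and "\<And>i j. (Suc i, j) \<in> cells la \<Longrightarrow> T (i, j) < T (Suc i, j)"
  using assms by (auto simp: ssyt_def)

lemma ssyt_row:
  assumes "T \<in> ssyt n la" "(i, j') \<in> cells la" "j \<le> j'"
  shows "T (i, j) \<le> T (i, j')"
  using assms(2,3)
proof (induction j' arbitrary: j)
  case 0 then show ?case by simp
next
  case (Suc j')
  show ?case
  proof (cases "j = Suc j'")
    case False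
    then have "j \<le> j'" using Suc by simp
    have c: "(i, j') \<in> cells la" using Suc.prems by (auto simp: cells_iff)
    have "T (i, j) \<le> T (i, j')" using Suc.IH[OF c \<open>j \<le> j'\<close>] .
    also have "\<dots> \<le> T (i, Suc j')" using ssytD(3)[OF assms(1) Suc.prems(1)] .
    finally show ?thesis .
  qed simp
qed

lemma ssyt_col:
  assumes "T \<in> ssyt n la" "sorted_wrt (\<ge>) la" "(i', j) \<in> cells la" "i < i'"
  shows "T (i, j) < T (i', j)"
  using assms(3,4)
proof (induction i')
  case 0 then show ?case by simp
next
  case (Suc i')
  have c: "(i', j) \<in> cells la" using young[OF assms(2) Suc.prems(1)] by simp
  have s: "T (i', j) < T (Suc i', j)" using ssytD(4)[OF assms(1) Suc.prems(1)] .
  show ?case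
  proof (cases "i = i'")
    case False
    then have "i < i'" using Suc by simp
    with Suc.IH[OF c] s show ?thesis by simp
  qed (use s in simp)
qed

lemma ssyt_ge_row:
  assumes "T \<in> ssyt n la" "sorted_wrt (\<ge>) la" "(i, j) \<in> cells la"
  shows "i \<le> T (i, j)"
  using assms(3)
proof (induction i)
  case 0 then show ?case by simp
next
  case (Suc i)
  have c: "(i, j) \<in> cells la" using young[OF assms(2) Suc.prems] by simp
  with Suc.IH ssytD(4)[OF assms(1) Suc.prems] show ?case by simp
qed

lemma finite_ssyt: "finite (ssyt n la)"
proof -
  have "ssyt n la \<subseteq> {f. \<forall>x. (x \<in> cells la \<longrightarrow> f x \<in> {..<n}) \<and> (x \<notin> cells la \<longrightarrow> f x = 0)}"
    by (auto simp: ssyt_def)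
  then show ?thesis
    by (rule finite_subset) (intro finite_set_of_finite_funs finite_cells finite_lessThan)
qed


lemma downclosed_eq:
  fixes S :: "nat set"
  assumes "finite S" "\<And>j j'. j \<le> j' \<Longrightarrow> j' \<in> S \<Longrightarrow> j \<in> S"
  shows "S = {..<card S}"
proof (cases "S = {}")
  case False
  have "S = {..Max S}"
  proof
    show "S \<subseteq> {..Max S}" using assms(1) by auto
    show "{..Max S} \<subseteq> S" using assms(2)[of _ "Max S"] Max_in[OF assms(1) False] by auto
  qed
  then show ?thesis by (metis card_atMost lessThan_Suc_atMost)
qed simp

definition cls :: "nat list \<Rightarrow> nat \<Rightarrow> (nat \<times> nat \<Rightarrow> nat) \<Rightarrow> nat \<Rightarrow> nat \<Rightarrow> nat" where
  "cls la k T i j = (if T (i, j) < k then 0 else if T (i, j) = k then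
      (if (Suc i, j) \<in> cells la \<and> T (Suc i, j) = Suc k then 1 else 2)
    else if T (i, j) = Suc k then (if 0 < i \<and> T (i - 1, j) = k then 4 else 3) else 5)"

definition free :: "nat list \<Rightarrow> nat \<Rightarrow> (nat \<times> nat \<Rightarrow> nat) \<Rightarrow> nat \<times> nat \<Rightarrow> bool" where
  "free la k T c \<longleftrightarrow> c \<in> cells la \<and> cls la k T (fst c) (snd c) \<in> {2, 3}"

definition Nc :: "nat list \<Rightarrow> nat \<Rightarrow> (nat \<times> nat \<Rightarrow> nat) \<Rightarrow> nat \<Rightarrow> nat \<Rightarrow> nat" where
  "Nc la k T i c = card {j. j < la ! i \<and> cls la k T i j < c}"

definition bk :: "nat list \<Rightarrow> nat \<Rightarrow> (nat \<times> nat \<Rightarrow> nat) \<Rightarrow> nat \<times> nat \<Rightarrow> nat" where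
  "bk la k T c = (if free la k T c then
      (if snd c < Nc la k T (fst c) 2 + (Nc la k T (fst c) 4 - Nc la k T (fst c) 3) then k else Suc k)
    else T c)"

definition cnt :: "nat list \<Rightarrow> (nat \<times> nat \<Rightarrow> nat) \<Rightarrow> nat \<Rightarrow> nat" where
  "cnt la' T' v = card {c \<in> cells la'. T' c = v}"

locale bkloc =
  fixes n :: nat and la :: "nat list" and k :: nat and T :: "nat \<times> nat \<Rightarrow> nat"
  assumes sorted: "sorted_wrt (\<ge>) la" and T: "T \<in> ssyt n la" and kn: "Suc k < n"
begin

abbreviation "C \<equiv> cls la k T"

lemma cls_mono:
  assumes c: "(i, j') \<in> cells la" and jj: "j \<le> j'"
  shows "C i j \<le> C i j'"
proof -
  have cij: "(i, j) \<in> cells la" using young[OF sorted c order.refl jj] .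
  have r: "T (i, j) \<le> T (i, j')" using ssyt_row[OF T c jj] .
  show ?thesis
  proof (cases "T (i, j) = T (i, j')")
    case False
    with r have "T (i, j) < T (i, j')" by simp
    then show ?thesis unfolding cls_def by auto
  next
    case eq: True
    have k1: "C i j \<le> C i j'" if tk: "T (i, j) = k"
    proof -
      have "(Suc i, j) \<in> cells la \<and> T (Suc i, j) = Suc k"
        if h: "(Suc i, j') \<in> cells la" "T (Suc i, j') = Suc k"
      proof -
        have c2: "(Suc i, j) \<in> cells la" using young[OF sorted h(1) order.refl jj] .
        have "T (Suc i, j) \<le> T (Suc i, j')" using ssyt_row[OF T h(1) jj] .
        moreover have "T (i, j) < T (Suc i, j)" using ssytD(4)[OF T c2] .
        ultimately show ?thesis using h tk c2 by simp
      qed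
      then show ?thesis using that eq unfolding cls_def by auto
    qed
    have k2: "C i j \<le> C i j'" if "T (i, j) = Suc k"
    proof -
      have "T (i - 1, j') = k" if h: "0 < i" "T (i - 1, j) = k"
      proof -
        have c2: "(i - 1, j') \<in> cells la" using young[OF sorted c _ order.refl, of "i - 1"] by simp
        have "T (i - 1, j) \<le> T (i - 1, j')" using ssyt_row[OF T c2 jj] .
        moreover have "T (i - 1, j') < T (i, j')" using ssyt_col[OF T sorted c, of "i - 1"] h by simp
        ultimately show ?thesis using h eq \<open>T (i, j) = Suc k\<close> by simp
      qed
      then show ?thesis using that eq unfolding cls_def by auto
    qed
    show ?thesis
      using k1 k2 eq unfolding cls_def by (cases "T (i, j) < k") auto
  qed
qed

lemma cls_le5: "cls la' k' T' i j \<le> 5"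
  by (simp add: cls_def)

lemma cls_lt_iff:
  assumes "(i, j) \<in> cells la"
  shows "C i j < c \<longleftrightarrow> j < Nc la k T i c"
proof -
  let ?S = "{j. j < la ! i \<and> C i j < c}"
  have fin: "finite ?S" by simp
  have dc: "j \<in> ?S" if "j \<le> j'" "j' \<in> ?S" for j j'
  proof -
    have c': "(i, j') \<in> cells la" using that assms by (auto simp: cells_iff)
    show ?thesis using cls_mono[OF c' that(1)] that by auto
  qed
  have "?S = {..<card ?S}" by (rule downclosed_eq[OF fin dc])
  then have "j \<in> ?S \<longleftrightarrow> j < Nc la k T i c" unfolding Nc_def by (metis lessThan_iff)
  then show ?thesis using assms by (auto simp: cells_iff)
qed

lemma Nc_le: "Nc la k T i c \<le> la ! i"
proof -
  have "{j. j < la ! i \<and> C i j < c} \<subseteq> {..<la ! i}" by auto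
  from card_mono[OF finite_lessThan this] show ?thesis unfolding Nc_def by simp
qed

lemma Nc_mono: "c \<le> c' \<Longrightarrow> Nc la k T i c \<le> Nc la k T i c'"
  unfolding Nc_def by (intro card_mono) auto

lemma free_iff: "free la k T (i, j) \<longleftrightarrow> (i, j) \<in> cells la \<and> Nc la k T i 2 \<le> j \<and> j < Nc la k T i 4"
proof (cases "(i, j) \<in> cells la")
  case True
  have "C i j \<in> {2, 3} \<longleftrightarrow> \<not> C i j < 2 \<and> C i j < 4" by auto
  then show ?thesis using True cls_lt_iff[OF True, of 2] cls_lt_iff[OF True, of 4] by (simp add: free_def not_less)
qed (simp add: free_def)

lemma free_val: "free la k T c \<Longrightarrow> T c = k \<or> T c = Suc k"
  by (cases c) (auto simp: free_def cls_def split: if_splits)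

lemma free_k_iff:
  assumes "free la k T (i, j)"
  shows "T (i, j) = k \<longleftrightarrow> j < Nc la k T i 3"
proof -
  have c: "(i, j) \<in> cells la" using assms by (simp add: free_def)
  have "T (i, j) = k \<longleftrightarrow> C i j < 3" using assms by (auto simp: free_def cls_def split: if_splits)
  then show ?thesis using cls_lt_iff[OF c] by simp
qed

lemma free_below:
  assumes "free la k T (i, j)" "(Suc i, j) \<in> cells la"
  shows "Suc (Suc k) \<le> T (Suc i, j)"
proof -
  have lt: "T (i, j) < T (Suc i, j)" using ssytD(4)[OF T assms(2)] .
  show ?thesis using assms(1) lt assms(2) by (auto simp: free_def cls_def split: if_splits)
qed

lemma free_above:
  assumes "free la k T (Suc i, j)"
  shows "T (i, j) < k"
proof -
  have c: "(Suc i, j) \<in> cells la" using assms by (simp add: free_def)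
  have lt: "T (i, j) < T (Suc i, j)" using ssytD(4)[OF T c] .
  show ?thesis using assms lt by (auto simp: free_def cls_def split: if_splits)
qed

abbreviation "B \<equiv> bk la k T"

lemma bk_nonfree: "\<not> free la k T c \<Longrightarrow> B c = T c"
  by (simp add: bk_def)

lemma bk_free_val: "free la k T c \<Longrightarrow> B c = k \<or> B c = Suc k"
  by (simp add: bk_def)

lemma bk_ssyt: "B \<in> ssyt n la"
proof -
  have 1: "B c < n" if "c \<in> cells la" for c
    using ssytD(1)[OF T that] kn bk_free_val[of c] bk_nonfree[of c] by (cases "free la k T c") auto
  have 2: "B c = 0" if "c \<notin> cells la" for c
    using that ssytD(2)[OF T that] by (simp add: bk_def free_def)
  have 3: "B (i, j) \<le> B (i, Suc j)" if c: "(i, Suc j) \<in> cells la" for i j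
  proof -
    have cj: "(i, j) \<in> cells la" using c by (auto simp: cells_iff)
    have m: "C i j \<le> C i (Suc j)" using cls_mono[OF c] by simp
    have r: "T (i, j) \<le> T (i, Suc j)" using ssytD(3)[OF T c] .
    consider "free la k T (i, j)" "free la k T (i, Suc j)" | "free la k T (i, j)" "\<not> free la k T (i, Suc j)"
      | "\<not> free la k T (i, j)" "free la k T (i, Suc j)" | "\<not> free la k T (i, j)" "\<not> free la k T (i, Suc j)"
      by blast
    then show ?thesis
    proof cases
      case 1 then show ?thesis by (auto simp: bk_def)
    next
      case 2
      then have "C i (Suc j) \<in> {4, 5}" using m c cj cls_le5[of la k T i "Suc j"] by (auto simp: free_def)
      then have "Suc k \<le> T (i, Suc j)" by (auto simp: cls_def split: if_splits)
      then show ?thesis using 2 by (auto simp: bk_def)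
    next
      case 3
      then have "C i j \<in> {0, 1}" using m c cj by (auto simp: free_def)
      then have "T (i, j) \<le> k" by (auto simp: cls_def split: if_splits)
      then show ?thesis using 3 by (auto simp: bk_def)
    qed (use r in \<open>simp add: bk_def\<close>)
  qed
  have 4: "B (i, j) < B (Suc i, j)" if c: "(Suc i, j) \<in> cells la" for i j
  proof -
    have r: "T (i, j) < T (Suc i, j)" using ssytD(4)[OF T c] .
    show ?thesis
    proof (cases "free la k T (i, j)")
      case True
      then have "Suc (Suc k) \<le> T (Suc i, j)" using free_below c by blast
      then have "\<not> free la k T (Suc i, j)" using free_val by fastforce
      then show ?thesis using True \<open>Suc (Suc k) \<le> T (Suc i, j)\<close> bk_free_val[of "(i, j)"] bk_nonfree
        by fastforce
    next
      case False
      show ?thesis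
      proof (cases "free la k T (Suc i, j)")
        case True
        then have "T (i, j) < k" using free_above by blast
        then show ?thesis using True False bk_free_val[of "(Suc i, j)"] bk_nonfree by fastforce
      qed (use False r bk_nonfree in simp)
    qed
  qed
  show ?thesis using 1 2 3 4 by (simp add: ssyt_def)
qed

lemma cls_bk:
  assumes c: "(i, j) \<in> cells la"
  shows "cls la k B i j = (if free la k T (i, j) then (if B (i, j) = k then 2 else 3) else C i j)"
proof (cases "free la k T (i, j)")
  case True
  have below: "\<not> ((Suc i, j) \<in> cells la \<and> B (Suc i, j) = Suc k)"
  proof
    assume h: "(Suc i, j) \<in> cells la \<and> B (Suc i, j) = Suc k"
    then have "Suc (Suc k) \<le> T (Suc i, j)" using free_below True by blast
    then have "\<not> free la k T (Suc i, j)" using free_val by fastforce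
    then show False using h bk_nonfree \<open>Suc (Suc k) \<le> T (Suc i, j)\<close> by fastforce
  qed
  have above: "\<not> (0 < i \<and> B (i - 1, j) = k)"
  proof
    assume h: "0 < i \<and> B (i - 1, j) = k"
    then obtain i' where i': "i = Suc i'" by (cases i) auto
    then have "T (i', j) < k" using free_above True by blast
    then have "\<not> free la k T (i', j)" using free_val by fastforce
    then show False using h i' bk_nonfree \<open>T (i', j) < k\<close> by fastforce
  qed
  show ?thesis using True bk_free_val[OF True] below above unfolding cls_def by auto
next
  case False
  then have Bij: "B (i, j) = T (i, j)" by (rule bk_nonfree)
  have nf: "C i j \<notin> {2, 3}" using False c by (simp add: free_def)
  consider "T (i, j) < k" | "T (i, j) = k" | "T (i, j) = Suc k" | "Suc k < T (i, j)" by linarith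
  then show ?thesis
  proof cases
    case 2
    then have h: "(Suc i, j) \<in> cells la" "T (Suc i, j) = Suc k" using nf by (auto simp: cls_def split: if_splits)
    have "C (Suc i) j = 4" using h 2 unfolding cls_def by simp
    then have "\<not> free la k T (Suc i, j)" by (simp add: free_def)
    then have "B (Suc i, j) = Suc k" using h bk_nonfree by simp
    then show ?thesis using False Bij 2 h unfolding cls_def by simp
  next
    case 3
    then have h: "0 < i" "T (i - 1, j) = k" using nf by (auto simp: cls_def split: if_splits)
    have "C (i - 1) j = 1" using h 3 c unfolding cls_def by simp
    then have "\<not> free la k T (i - 1, j)" by (simp add: free_def)
    then have "B (i - 1, j) = k" using h bk_nonfree by simp
    then show ?thesis using False Bij 3 h unfolding cls_def by simp
  qed (use False Bij in \<open>auto simp: cls_def\<close>)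
qed

lemma free_bk: "free la k B c \<longleftrightarrow> free la k T c"
proof (cases "c \<in> cells la")
  case True
  obtain i j where c: "c = (i, j)" by (cases c)
  show ?thesis using cls_bk[of i j] True c
    by (auto simp: free_def simp del: One_nat_def)
qed (simp add: free_def)


lemma Nc_order: "Nc la k T i 2 \<le> Nc la k T i 3" "Nc la k T i 3 \<le> Nc la k T i 4"
  by (auto intro: Nc_mono)

lemma Nc_bk:
  assumes i: "i < length la"
  shows "Nc la k B i 2 = Nc la k T i 2" "Nc la k B i 4 = Nc la k T i 4"
    "Nc la k B i 3 = Nc la k T i 2 + (Nc la k T i 4 - Nc la k T i 3)"
proof -
  have cell: "(i, j) \<in> cells la" if "j < la ! i" for j using i that by (simp add: cells_iff)
  have e2: "cls la k B i j < 2 \<longleftrightarrow> C i j < 2" if "j < la ! i" for j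
    using cls_bk[OF cell[OF that]] cell[OF that] by (auto simp: free_def)
  have e4: "cls la k B i j < 4 \<longleftrightarrow> C i j < 4" if "j < la ! i" for j
    using cls_bk[OF cell[OF that]] cell[OF that] by (auto simp: free_def)
  show "Nc la k B i 2 = Nc la k T i 2" unfolding Nc_def using e2 by (metis (no_types, lifting))
  show "Nc la k B i 4 = Nc la k T i 4" unfolding Nc_def using e4 by (metis (no_types, lifting))
  let ?M = "Nc la k T i 2 + (Nc la k T i 4 - Nc la k T i 3)"
  have M: "?M \<le> la ! i" using Nc_order[of i] Nc_le[of i 4] by linarith
  have e3: "j < la ! i \<and> cls la k B i j < 3 \<longleftrightarrow> j < ?M" for j
  proof (cases "j < la ! i")
    case True
    note c = cell[OF True]
    show ?thesis
    proof (cases "free la k T (i, j)")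
      case fr: True
      have "B (i, j) = k \<longleftrightarrow> j < ?M" using fr by (simp add: bk_def)
      then show ?thesis using cls_bk[OF c] fr True by simp
    next
      case nf: False
      have "C i j \<noteq> 2" "C i j \<noteq> 3" using nf c by (auto simp: free_def)
      then have "C i j < 3 \<longleftrightarrow> C i j < 2" by linarith
      moreover have "C i j < 2 \<longleftrightarrow> j < Nc la k T i 2" using cls_lt_iff[OF c] .
      moreover have "\<not> (Nc la k T i 2 \<le> j \<and> j < Nc la k T i 4)" using nf c free_iff by simp
      ultimately show ?thesis using cls_bk[OF c] nf True Nc_order[of i] by auto
    qed
  next
    case False
    then show ?thesis using M by simp
  qed
  have "{j. j < la ! i \<and> cls la k B i j < 3} = {..<?M}" using e3 by auto
  then show "Nc la k B i 3 = ?M" unfolding Nc_def by simp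
qed

lemma bk_invol: "bk la k B = T"
proof
  fix c :: "nat \<times> nat"
  obtain i j where c: "c = (i, j)" by (cases c)
  show "bk la k B c = T c"
  proof (cases "free la k T c")
    case True
    then have cc: "(i, j) \<in> cells la" using c by (simp add: free_def)
    then have i: "i < length la" by (simp add: cells_iff)
    have fB: "free la k B c" using True free_bk by simp
    have "bk la k B c = (if j < Nc la k T i 3 then k else Suc k)"
      using fB c Nc_bk[OF i] Nc_order[of i] by (simp add: bk_def)
    also have "\<dots> = T c" using free_k_iff[of i j] True c free_val[OF True] by auto
    finally show ?thesis .
  next
    case False
    then have "\<not> free la k B c" using free_bk by simp
    then show ?thesis using False by (simp add: bk_def bk_nonfree)
  qed
qed


lemma cnt_bk_k: "card {c \<in> cells la. B c = k} = card {c \<in> cells la. T c = Suc k}"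
proof -
  let ?NF0 = "{c \<in> cells la. \<not> free la k T c \<and> T c = k}"
  let ?NF1 = "{c \<in> cells la. \<not> free la k T c \<and> T c = Suc k}"
  let ?FB = "{c \<in> cells la. free la k T c \<and> B c = k}"
  let ?F1 = "{c \<in> cells la. free la k T c \<and> T c = Suc k}"
  have s1: "{c \<in> cells la. B c = k} = ?NF0 \<union> ?FB" using bk_nonfree by auto
  have s2: "{c \<in> cells la. T c = Suc k} = ?NF1 \<union> ?F1" by auto
  have fin: "finite A" if "A \<subseteq> cells la" for A using finite_subset[OF that finite_cells] .
  have b1: "bij_betw (\<lambda>(i, j). (Suc i, j)) ?NF0 ?NF1"
  proof (rule bij_betw_imageI)
    show "inj_on (\<lambda>(i, j). (Suc i, j)) ?NF0" by (auto simp: inj_on_def)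
    show "(\<lambda>(i, j). (Suc i, j)) ` ?NF0 = ?NF1"
    proof
      show "(\<lambda>(i, j). (Suc i, j)) ` ?NF0 \<subseteq> ?NF1"
      proof
        fix x assume "x \<in> (\<lambda>(i, j). (Suc i, j)) ` ?NF0"
        then obtain i j where x: "x = (Suc i, j)" and
          h: "(i, j) \<in> cells la" "\<not> free la k T (i, j)" "T (i, j) = k" by auto
        from h have "C i j \<noteq> 2" by (simp add: free_def)
        then have h2: "(Suc i, j) \<in> cells la" "T (Suc i, j) = Suc k" using h(3) by (auto simp: cls_def split: if_splits)
        then have "C (Suc i) j = 4" using h(3) by (simp add: cls_def)
        then show "x \<in> ?NF1"
          using h2 x by (simp add: free_def)
      qed
      show "?NF1 \<subseteq> (\<lambda>(i, j). (Suc i, j)) ` ?NF0"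
      proof
        fix x assume "x \<in> ?NF1"
        then obtain i j where x: "x = (i, j)" and
          h: "(i, j) \<in> cells la" "\<not> free la k T (i, j)" "T (i, j) = Suc k" by (cases x) auto
        from h have "C i j \<noteq> 3" by (simp add: free_def)
        then have h2: "0 < i" "T (i - 1, j) = k" using h(3) by (auto simp: cls_def split: if_splits)
        then obtain i' where i': "i = Suc i'" by (cases i) auto
        have c': "(i', j) \<in> cells la" using young[OF sorted h(1), of i' j] i' by simp
        have "C i' j = 1" using h h2 i' by (simp add: cls_def)
        then have "(i', j) \<in> ?NF0" using c' h2 i' by (simp add: free_def)
        then show "x \<in> (\<lambda>(i, j). (Suc i, j)) ` ?NF0" using i' x by force
      qed
    qed
  qed
  let ?sh = "\<lambda>(i, j). (i, j + (Nc la k T i 3 - Nc la k T i 2))"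
  have b2: "bij_betw ?sh ?FB ?F1"
  proof (rule bij_betw_imageI)
    show "inj_on ?sh ?FB" by (auto simp: inj_on_def)
    have memFB: "(i, j) \<in> ?FB \<longleftrightarrow> (i, j) \<in> cells la \<and> Nc la k T i 2 \<le> j \<and>
        j < Nc la k T i 2 + (Nc la k T i 4 - Nc la k T i 3)" for i j
      using free_iff[of i j] Nc_order[of i] by (auto simp: bk_def)
    have memF1: "(i, j) \<in> ?F1 \<longleftrightarrow> (i, j) \<in> cells la \<and> Nc la k T i 3 \<le> j \<and> j < Nc la k T i 4" for i j
    proof -
      have "free la k T (i, j) \<and> T (i, j) = Suc k \<longleftrightarrow> free la k T (i, j) \<and> \<not> j < Nc la k T i 3"
        using free_k_iff[of i j] free_val[of "(i, j)"] by auto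
      then show ?thesis using free_iff[of i j] Nc_order[of i] by auto
    qed
    have rowcell: "(i, j') \<in> cells la" if "(i, j) \<in> cells la" "j' < Nc la k T i 4" for i j j'
      using that Nc_le[of i 4] by (auto simp: cells_iff)
    show "?sh ` ?FB = ?F1"
    proof
      show "?sh ` ?FB \<subseteq> ?F1"
      proof
        fix x assume "x \<in> ?sh ` ?FB"
        then obtain y where y: "y \<in> ?FB" "x = ?sh y" by (rule imageE)
        obtain i j where yij: "y = (i, j)" by (cases y)
        from y(1) have h: "(i, j) \<in> cells la" "Nc la k T i 2 \<le> j"
          "j < Nc la k T i 2 + (Nc la k T i 4 - Nc la k T i 3)" unfolding yij memFB by blast+
        have o: "Nc la k T i 2 \<le> Nc la k T i 3" "Nc la k T i 3 \<le> Nc la k T i 4" by (rule Nc_order)+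
        obtain d where d: "Nc la k T i 3 = Nc la k T i 2 + d" using o(1) le_iff_add by blast
        obtain e where e: "Nc la k T i 4 = Nc la k T i 3 + e" using o(2) le_iff_add by blast
        have a1: "Nc la k T i 3 \<le> j + (Nc la k T i 3 - Nc la k T i 2)" using h(2) unfolding d by simp
        have a2: "j + (Nc la k T i 3 - Nc la k T i 2) < Nc la k T i 4" using h(3) unfolding e d by simp
        have x: "x = (i, j + (Nc la k T i 3 - Nc la k T i 2))" using y(2) yij by simp
        show "x \<in> ?F1" unfolding x memF1 using a1 a2 rowcell[OF h(1) a2] by blast
      qed
      show "?F1 \<subseteq> ?sh ` ?FB"
      proof
        fix x assume xF: "x \<in> ?F1"
        obtain i j where x: "x = (i, j)" by (cases x)
        from xF have h: "(i, j) \<in> cells la" "Nc la k T i 3 \<le> j" "j < Nc la k T i 4"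
          unfolding x memF1 by blast+
        have o: "Nc la k T i 2 \<le> Nc la k T i 3" "Nc la k T i 3 \<le> Nc la k T i 4" by (rule Nc_order)+
        obtain d where d: "Nc la k T i 3 = Nc la k T i 2 + d" using o(1) le_iff_add by blast
        obtain e where e: "Nc la k T i 4 = Nc la k T i 3 + e" using o(2) le_iff_add by blast
        obtain j0 where j0: "j = Nc la k T i 3 + j0" using h(2) le_iff_add by blast
        define j' where "j' = Nc la k T i 2 + j0"
        have a1: "Nc la k T i 2 \<le> j'" unfolding j'_def by simp
        have a2: "j' < Nc la k T i 2 + (Nc la k T i 4 - Nc la k T i 3)"
          using h(3) unfolding j'_def j0 e by simp
        have a3: "j' \<le> j" unfolding j'_def j0 d by simp
        have "(i, j') \<in> ?FB" unfolding memFB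
          using a1 a2 young[OF sorted h(1) order.refl a3] by blast
        moreover have "x = ?sh (i, j')" unfolding x j'_def j0 using d by simp
        ultimately show "x \<in> ?sh ` ?FB" by (rule rev_image_eqI)
      qed
    qed
  qed
  have f0: "finite ?NF0" by (rule fin) auto
  have f1: "finite ?FB" by (rule fin) auto
  have f2: "finite ?NF1" by (rule fin) auto
  have f3: "finite ?F1" by (rule fin) auto
  have d1: "?NF0 \<inter> ?FB = {}" by blast
  have d2: "?NF1 \<inter> ?F1 = {}" by blast
  have "card {c \<in> cells la. B c = k} = card ?NF0 + card ?FB"
    unfolding s1 by (rule card_Un_disjoint[OF f0 f1 d1])
  also have "\<dots> = card ?NF1 + card ?F1" using bij_betw_same_card[OF b1] bij_betw_same_card[OF b2] by simp
  also have "\<dots> = card {c \<in> cells la. T c = Suc k}"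
    unfolding s2 by (rule card_Un_disjoint[OF f2 f3 d2, symmetric])
  finally show ?thesis .
qed

end

lemma bkloc_bk: "bkloc n la k T \<Longrightarrow> bkloc n la k (bk la k T)"
  using bkloc.bk_ssyt by (auto simp: bkloc_def)

lemma (in bkloc) cnt_bk: "cnt la B v = cnt la T (Transposition.transpose k (Suc k) v)"
proof -
  interpret BB: bkloc n la k B using bkloc_bk bkloc_axioms by blast
  have other: "{c \<in> cells la. B c = v} = {c \<in> cells la. T c = v}" if "v \<noteq> k" "v \<noteq> Suc k"
    using that bk_free_val bk_nonfree free_val by fastforce
  show ?thesis
  proof (cases "v = k")
    case True then show ?thesis using cnt_bk_k by (simp add: cnt_def)
  next
    case False
    show ?thesis
    proof (cases "v = Suc k")
      case True
      have "card {c \<in> cells la. bk la k B c = k} = card {c \<in> cells la. B c = Suc k}" by (rule BB.cnt_bk_k)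
      then show ?thesis using True bk_invol by (simp add: cnt_def)
    qed (use False other in \<open>simp add: cnt_def transpose_def\<close>)
  qed
qed


lemma lookup_content: "Poly_Mapping.lookup (tableau_content la T) = cnt la T"
proof -
  have "{v. cnt la T v \<noteq> 0} \<subseteq> T ` cells la"
    by (auto simp: cnt_def card_eq_0_iff)
  then have "finite {v. cnt la T v \<noteq> 0}" using finite_cells finite_subset by blast
  then show ?thesis unfolding tableau_content_def cnt_def[abs_def]
    by (simp add: Abs_poly_mapping_inverse cnt_def)
qed

lemma lookup_schur: "Poly_Mapping.lookup (schur n la) b = int (card {T \<in> ssyt n la. tableau_content la T = b})"
proof -
  have "Poly_Mapping.lookup (schur n la) b = (\<Sum>T\<in>ssyt n la. if tableau_content la T = b then 1 else 0)"
    unfolding schur_def lookup_sum by (auto simp: lookup_single when_def intro!: sum.cong)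
  also have "\<dots> = int (card {T \<in> ssyt n la. tableau_content la T = b})"
    using finite_ssyt by (simp add: sum.If_cases Int_def)
  finally show ?thesis .
qed


lemma map_key_transpose_invol:
  "Poly_Mapping.map_key (Transposition.transpose a b) (Poly_Mapping.map_key (Transposition.transpose a b) x) = x"
  by (simp add: map_key_compose[OF inj_transpose inj_transpose] map_key_id[unfolded id_def[symmetric]])

lemma (in bkloc) content_bk:
  "tableau_content la (bk la k T) = Poly_Mapping.map_key (Transposition.transpose k (Suc k)) (tableau_content la T)"
  by (rule poly_mapping_eqI) (simp add: lookup_content map_key.rep_eq[OF inj_transpose] cnt_bk)

lemma schur_adj:
  assumes "sorted_wrt (\<ge>) la" "Suc k < n"
  shows "Poly_Mapping.lookup (schur n la) (Poly_Mapping.map_key (Transposition.transpose k (Suc k)) b)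
       = Poly_Mapping.lookup (schur n la) b"
proof -
  let ?t = "Transposition.transpose k (Suc k)"
  have loc: "bkloc n la k T" if "T \<in> ssyt n la" for T using assms that by (simp add: bkloc_def)
  have "bij_betw (bk la k) {T \<in> ssyt n la. tableau_content la T = b}
      {T \<in> ssyt n la. tableau_content la T = Poly_Mapping.map_key ?t b}"
  proof (rule bij_betw_byWitness[where f' = "bk la k"])
    show "\<forall>T\<in>{T \<in> ssyt n la. tableau_content la T = b}. bk la k (bk la k T) = T"
      using loc bkloc.bk_invol by blast
    show "\<forall>T\<in>{T \<in> ssyt n la. tableau_content la T = Poly_Mapping.map_key ?t b}. bk la k (bk la k T) = T"
      using loc bkloc.bk_invol by blast
    show "bk la k ` {T \<in> ssyt n la. tableau_content la T = b}
        \<subseteq> {T \<in> ssyt n la. tableau_content la T = Poly_Mapping.map_key ?t b}"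
      using loc bkloc.bk_ssyt bkloc.content_bk by fastforce
    show "bk la k ` {T \<in> ssyt n la. tableau_content la T = Poly_Mapping.map_key ?t b}
        \<subseteq> {T \<in> ssyt n la. tableau_content la T = b}"
    proof clarify
      fix T assume T: "T \<in> ssyt n la" "tableau_content la T = Poly_Mapping.map_key ?t b"
      show "bk la k T \<in> ssyt n la \<and> tableau_content la (bk la k T) = b"
        using bkloc.bk_ssyt[OF loc[OF T(1)]] bkloc.content_bk[OF loc[OF T(1)]] T(2)
        by (simp add: map_key_transpose_invol)
    qed
  qed
  then show ?thesis unfolding lookup_schur by (simp add: bij_betw_same_card)
qed

definition invar :: "ipoly \<Rightarrow> (nat \<Rightarrow> nat) \<Rightarrow> bool" where
  "invar f s \<longleftrightarrow> (\<forall>b. Poly_Mapping.lookup f (Poly_Mapping.map_key s b) = Poly_Mapping.lookup f b)"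

lemma invar_comp:
  assumes "inj s" "inj s'" "invar f s" "invar f s'"
  shows "invar f (s \<circ> s')"
  using assms unfolding invar_def by (metis map_key_compose)

lemma transpose_conj:
  assumes "a < c"
  shows "Transposition.transpose a (Suc c) = Transposition.transpose c (Suc c) \<circ> Transposition.transpose a c \<circ> Transposition.transpose c (Suc c)"
  using assms by (auto simp: fun_eq_iff transpose_def)

lemma invar_transpose:
  assumes adj: "\<And>k. Suc k < n \<Longrightarrow> invar f (Transposition.transpose k (Suc k))"
  assumes "a < b" "b < n"
  shows "invar f (Transposition.transpose a b)"
  using assms(2,3)
proof (induction b)
  case 0 then show ?case by simp
next
  case (Suc b)
  show ?case
  proof (cases "a = b")
    case True then show ?thesis using adj Suc by simp
  next
    case False
    then have ab: "a < b" using Suc by simp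
    let ?t1 = "Transposition.transpose b (Suc b)" and ?t2 = "Transposition.transpose a b"
    have eq: "Transposition.transpose a (Suc b) = ?t1 \<circ> ?t2 \<circ> ?t1"
      using transpose_conj[of a b] ab by simp
    have i1: "invar f ?t1" using adj Suc by simp
    have i2: "invar f ?t2" using Suc ab by simp
    have i12: "invar f (?t1 \<circ> ?t2)" by (rule invar_comp[OF inj_transpose inj_transpose i1 i2])
    have "invar f (?t1 \<circ> ?t2 \<circ> ?t1)"
      by (rule invar_comp[OF inj_compose[OF inj_transpose inj_transpose] inj_transpose i12 i1])
    then show ?thesis by (simp only: eq)
  qed
qed

lemma invar_permutes:
  assumes adj: "\<And>k. Suc k < n \<Longrightarrow> invar f (Transposition.transpose k (Suc k))"
  assumes "s permutes {..<n}"
  shows "invar f s"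
proof (rule permutes_induct[OF assms(2) finite_lessThan])
  show "invar f id" unfolding invar_def id_def by (simp add: map_key_id)
next
  fix a b p assume swap: "a \<in> {..<n}" "b \<in> {..<n}" "a \<noteq> b" "invar f p" "p permutes {..<n}"
  have it: "invar f (Transposition.transpose a b)"
  proof (cases "a < b")
    case True then show ?thesis using invar_transpose[OF adj True] swap by auto
  next
    case False
    then have "b < a" using swap by simp
    then have "invar f (Transposition.transpose b a)" using invar_transpose[OF adj \<open>b < a\<close>] swap by auto
    then show ?thesis by (metis transpose_commute)
  qed
  show "invar f (Transposition.transpose a b \<circ> p)"
    by (rule invar_comp[OF inj_transpose permutes_inj[OF swap(5)] it swap(4)])
qed

lemma keys_schur: "b \<in> Poly_Mapping.keys (schur n la) \<Longrightarrow> Poly_Mapping.keys b \<subseteq> {..<n}"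
proof -
  assume "b \<in> Poly_Mapping.keys (schur n la)"
  then have "card {T \<in> ssyt n la. tableau_content la T = b} \<noteq> 0" by (simp add: lookup_schur in_keys_iff)
  then have "{T \<in> ssyt n la. tableau_content la T = b} \<noteq> {}" by (metis card.empty)
  then obtain T where T: "T \<in> ssyt n la" "tableau_content la T = b" by blast
  show ?thesis
  proof
    fix v assume "v \<in> Poly_Mapping.keys b"
    then have "cnt la T v \<noteq> 0" using T(2) lookup_content by (metis in_keys_iff)
    then obtain c where "c \<in> cells la" "T c = v" by (auto simp: cnt_def card_eq_0_iff)
    then show "v \<in> {..<n}" using ssytD(1)[OF T(1), of c] by auto
  qed
qed

lemma symmetric_schur:
  assumes "sorted_wrt (\<ge>) la"
  shows "symmetric_poly n (schur n la)"
  unfolding symmetric_poly_def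
proof (intro conjI allI impI ballI)
  show "\<And>b. b \<in> Poly_Mapping.keys (schur n la) \<Longrightarrow> Poly_Mapping.keys b \<subseteq> {..<n}" by (rule keys_schur)
  fix s b assume "s permutes {..<n}"
  then have "invar (schur n la) s"
    by (rule invar_permutes[rotated]) (use schur_adj[OF assms] in \<open>auto simp: invar_def\<close>)
  then show "Poly_Mapping.lookup (schur n la) (Poly_Mapping.map_key s b) = Poly_Mapping.lookup (schur n la) b"
    by (simp add: invar_def)
qed


abbreviation lk :: "('a \<Rightarrow>\<^sub>0 'b::zero) \<Rightarrow> 'a \<Rightarrow> 'b" where "lk \<equiv> Poly_Mapping.lookup"
abbreviation sgl :: "'a \<Rightarrow> 'b \<Rightarrow> ('a \<Rightarrow>\<^sub>0 'b::zero)" where "sgl \<equiv> Poly_Mapping.single"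
abbreviation mk :: "('a \<Rightarrow> 'a) \<Rightarrow> ('a \<Rightarrow>\<^sub>0 'b::zero) \<Rightarrow> ('a \<Rightarrow>\<^sub>0 'b)" where "mk \<equiv> Poly_Mapping.map_key"

lemma poly_sum_monomials: "(\<Sum>b\<in>Poly_Mapping.keys p. sgl b (lk p b)) = p"
proof (rule poly_mapping_eqI)
  fix x
  have "lk (\<Sum>b\<in>Poly_Mapping.keys p. sgl b (lk p b)) x = (\<Sum>b\<in>Poly_Mapping.keys p. if b = x then lk p b else 0)"
    by (auto simp: lookup_sum lookup_single when_def intro!: sum.cong)
  also have "\<dots> = lk p x" by (simp add: in_keys_iff)
  finally show "lk (\<Sum>b\<in>Poly_Mapping.keys p. sgl b (lk p b)) x = lk p x" .
qed

lemma of_int_mult_single: "(of_int c :: ipoly) * sgl m d = sgl m (c * d)"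
  by (metis add_0 mult_single single_of_int of_int_eq_id id_apply)

definition Perms :: "nat \<Rightarrow> (nat \<Rightarrow> nat) set" where "Perms n = {s. s permutes {..<n}}"

lemma finite_Perms: "finite (Perms n)"
  unfolding Perms_def by (rule finite_permutations) simp

definition alt :: "nat \<Rightarrow> (nat \<Rightarrow>\<^sub>0 nat) \<Rightarrow> ipoly" where
  "alt n g = (\<Sum>s\<in>Perms n. sgl (mk s g) (sign s))"

lemma perm_inj: "s \<in> Perms n \<Longrightarrow> inj s"
  unfolding Perms_def using permutes_inj by blast

lemma mk_comp: "s \<in> Perms n \<Longrightarrow> t \<in> Perms n \<Longrightarrow> mk s (mk t g) = mk (t \<circ> s) g"
  by (rule map_key_compose) (auto intro: perm_inj)

lemma Perms_reindex:
  assumes "t \<in> Perms n"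
  shows "(\<Sum>s\<in>Perms n. F (t \<circ> s)) = (\<Sum>s\<in>Perms n. F s)"
proof (rule sum.reindex_bij_witness[where i = "\<lambda>s. inv t \<circ> s" and j = "\<lambda>s. t \<circ> s"])
  have tp: "t permutes {..<n}" using assms by (simp add: Perms_def)
  show "\<And>s. s \<in> Perms n \<Longrightarrow> inv t \<circ> (t \<circ> s) = s"
    using permutes_inv_o(2)[OF tp] by (simp add: o_assoc)
  show "\<And>s. s \<in> Perms n \<Longrightarrow> t \<circ> s \<in> Perms n"
    using tp by (simp add: Perms_def permutes_compose)
  show "\<And>s. s \<in> Perms n \<Longrightarrow> t \<circ> (inv t \<circ> s) = s"
    using permutes_inv_o(1)[OF tp] by (simp add: o_assoc)
  show "\<And>s. s \<in> Perms n \<Longrightarrow> inv t \<circ> s \<in> Perms n"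
    using tp by (simp add: Perms_def permutes_compose permutes_inv)
qed simp

lemma sign_Perms: "s \<in> Perms n \<Longrightarrow> permutation s"
  unfolding Perms_def using permutation_permutes by blast

lemma alt_mk:
  assumes t: "t \<in> Perms n"
  shows "alt n (mk t g) = of_int (sign t) * alt n g"
proof -
  have "alt n (mk t g) = (\<Sum>s\<in>Perms n. sgl (mk (t \<circ> s) g) (sign s))"
    unfolding alt_def by (intro sum.cong refl) (simp add: mk_comp t)
  also have "\<dots> = (\<Sum>s\<in>Perms n. sgl (mk (t \<circ> (inv t \<circ> (t \<circ> s))) g) (sign (inv t \<circ> (t \<circ> s))))"
  proof -
    have tp: "t permutes {..<n}" using t by (simp add: Perms_def)
    show ?thesis using permutes_inv_o(2)[OF tp] by (simp add: o_assoc)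
  qed
  also have "\<dots> = (\<Sum>s\<in>Perms n. sgl (mk (t \<circ> (inv t \<circ> s)) g) (sign (inv t \<circ> s)))"
    by (rule Perms_reindex[OF t, where F = "\<lambda>s. sgl (mk (t \<circ> (inv t \<circ> s)) g) (sign (inv t \<circ> s))"])
  also have "\<dots> = (\<Sum>s\<in>Perms n. sgl (mk s g) (sign t * sign s))"
  proof (intro sum.cong refl)
    fix s assume s: "s \<in> Perms n"
    have tp: "t permutes {..<n}" using t by (simp add: Perms_def)
    have "t \<circ> (inv t \<circ> s) = s" using permutes_inv_o(1)[OF tp] by (simp add: o_assoc)
    moreover have "sign (inv t \<circ> s) = sign t * sign s"
      using sign_compose[OF permutation_inverse[OF sign_Perms[OF t]] sign_Perms[OF s]]
        sign_inverse[OF sign_Perms[OF t]] by simp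
    ultimately show "sgl (mk (t \<circ> (inv t \<circ> s)) g) (sign (inv t \<circ> s)) = sgl (mk s g) (sign t * sign s)" by simp
  qed
  also have "\<dots> = of_int (sign t) * alt n g"
    unfolding alt_def sum_distrib_left by (simp add: of_int_mult_single)
  finally show ?thesis .
qed

lemma two_zero: "(p :: ipoly) = - p \<Longrightarrow> p = 0"
  by simp

lemma alt_repeat:
  assumes "Suc i < n" "lk g i = lk g (Suc i)"
  shows "alt n g = 0"
proof -
  let ?t = "Transposition.transpose i (Suc i)"
  have t: "?t \<in> Perms n" using assms by (simp add: Perms_def permutes_swap_id)
  have "mk ?t g = g"
    by (rule poly_mapping_eqI) (use assms in \<open>simp add: map_key.rep_eq[OF inj_transpose] transpose_def\<close>)
  have "alt n (mk ?t g) = of_int (sign ?t) * alt n g" by (rule alt_mk[OF t])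
  then have "alt n g = of_int (sign ?t) * alt n g" unfolding \<open>mk ?t g = g\<close> .
  also have "\<dots> = - alt n g" by (simp add: sign_swap_id)
  finally show ?thesis by (rule two_zero)
qed

lemma sym_keys_bij:
  assumes f: "symmetric_poly n f" and s: "s \<in> Perms n"
  shows "bij_betw (mk s) (Poly_Mapping.keys f) (Poly_Mapping.keys f)"
proof -
  have sp: "s permutes {..<n}" using s by (simp add: Perms_def)
  have inj: "inj (mk s)"
  proof (rule injI)
    fix x y assume "mk s x = mk s y"
    then have "lk x \<circ> s = lk y \<circ> s" by (metis map_key.rep_eq[OF permutes_inj[OF sp]])
    then show "x = y" using permutes_surj[OF sp] by (metis fun.map_comp poly_mapping_eqI surj_fun_eq)
  qed
  have into: "mk s ` Poly_Mapping.keys f \<subseteq> Poly_Mapping.keys f"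
    using f sp by (auto simp: symmetric_poly_def in_keys_iff)
  have "mk s ` Poly_Mapping.keys f = Poly_Mapping.keys f"
    by (rule endo_inj_surj[OF finite_keys into]) (rule inj_on_subset[OF inj], simp)
  then show ?thesis using inj_on_subset[OF inj subset_UNIV] unfolding bij_betw_def by blast
qed

lemma alt_mult_sym:
  assumes f: "symmetric_poly n f"
  shows "alt n g * f = (\<Sum>b\<in>Poly_Mapping.keys f. of_int (lk f b) * alt n (g + b))"
proof -
  have f_eq: "f = (\<Sum>b\<in>Poly_Mapping.keys f. sgl b (lk f b))" by (rule poly_sum_monomials[symmetric])
  have "alt n g * f = alt n g * (\<Sum>b\<in>Poly_Mapping.keys f. sgl b (lk f b))"
    using f_eq by (rule arg_cong)
  also have "\<dots> = (\<Sum>s\<in>Perms n. \<Sum>b\<in>Poly_Mapping.keys f. sgl (mk s g + b) (sign s * lk f b))"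
    by (simp add: alt_def sum_distrib_left sum_distrib_right mult_single sum.swap[of _ "Perms n"])
  also have "\<dots> = (\<Sum>s\<in>Perms n. \<Sum>b\<in>Poly_Mapping.keys f. sgl (mk s (g + b)) (sign s * lk f b))"
  proof (rule sum.cong[OF refl])
    fix s assume s: "s \<in> Perms n"
    have sp: "s permutes {..<n}" using s by (simp add: Perms_def)
    have "(\<Sum>b\<in>Poly_Mapping.keys f. sgl (mk s g + b) (sign s * lk f b))
        = (\<Sum>b\<in>Poly_Mapping.keys f. sgl (mk s g + mk s b) (sign s * lk f (mk s b)))"
      using sum.reindex_bij_betw[OF sym_keys_bij[OF f s], of "\<lambda>b. sgl (mk s g + b) (sign s * lk f b)"]
      by simp
    also have "\<dots> = (\<Sum>b\<in>Poly_Mapping.keys f. sgl (mk s (g + b)) (sign s * lk f b))"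
      using f sp by (simp add: symmetric_poly_def map_key_plus[OF permutes_inj[OF sp]])
    finally show "(\<Sum>b\<in>Poly_Mapping.keys f. sgl (mk s g + b) (sign s * lk f b))
        = (\<Sum>b\<in>Poly_Mapping.keys f. sgl (mk s (g + b)) (sign s * lk f b))" .
  qed
  also have "\<dots> = (\<Sum>b\<in>Poly_Mapping.keys f. \<Sum>s\<in>Perms n. sgl (mk s (g + b)) (sign s * lk f b))"
    by (rule sum.swap)
  also have "\<dots> = (\<Sum>b\<in>Poly_Mapping.keys f. of_int (lk f b) * alt n (g + b))"
    by (simp add: alt_def sum_distrib_left of_int_mult_single mult.commute)
  finally show ?thesis .
qed


definition sdec :: "nat \<Rightarrow> (nat \<Rightarrow>\<^sub>0 nat) \<Rightarrow> bool" where
  "sdec n g \<longleftrightarrow> (\<forall>i j. i < j \<longrightarrow> j < n \<longrightarrow> lk g j < lk g i)"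

lemma strict_mono_bij_id:
  fixes f :: "nat \<Rightarrow> nat"
  assumes mono: "\<And>i j. i < j \<Longrightarrow> j < n \<Longrightarrow> f i < f j" and into: "\<And>i. i < n \<Longrightarrow> f i < n"
  assumes "i < n"
  shows "f i = i"
proof -
  have ge: "i \<le> f i" if "i < n" for i
    using that
  proof (induction i)
    case (Suc i)
    then have "f i < f (Suc i)" using mono by simp
    with Suc show ?case by simp
  qed simp
  have up: "f i + (j - i) \<le> f j" if "i \<le> j" "j < n" for i j
    using that
  proof (induction j)
    case (Suc j)
    show ?case
    proof (cases "i = Suc j")
      case False
      then have "i \<le> j" using Suc by simp
      then have "f i + (j - i) \<le> f j" using Suc by simp
      moreover have "f j < f (Suc j)" using mono Suc by simp
      ultimately show ?thesis using \<open>i \<le> j\<close> by simp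
    qed simp
  qed simp
  have a: "f i + (n - 1 - i) \<le> f (n - 1)" using up[of i "n - 1"] assms by simp
  have b: "f (n - 1) < n" using into assms by simp
  from a b assms(3) have "f i \<le> i" by arith
  with ge[OF assms(3)] show ?thesis by simp
qed

lemma perm_sdec_id:
  assumes s: "s \<in> Perms n" and g: "sdec n g" and h: "sdec n (mk s g)"
  shows "s = id"
proof -
  have sp: "s permutes {..<n}" using s by (simp add: Perms_def)
  have lk: "lk (mk s g) i = lk g (s i)" for i by (simp add: map_key.rep_eq[OF permutes_inj[OF sp]])
  have into: "s i < n" if "i < n" for i using permutes_in_image[OF sp] that by simp
  have mono: "s i < s j" if "i < j" "j < n" for i j
  proof (rule ccontr)
    assume "\<not> s i < s j"
    moreover have "s i \<noteq> s j" using that permutes_inj[OF sp] by (metis inj_eq less_irrefl)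
    ultimately have "s j < s i" by simp
    then have "lk g (s i) < lk g (s j)" using g into that unfolding sdec_def by auto
    moreover have "lk g (s j) < lk g (s i)" using h that unfolding sdec_def lk by auto
    ultimately show False by simp
  qed
  show ?thesis
  proof
    fix i show "s i = id i"
    proof (cases "i < n")
      case True then show ?thesis using strict_mono_bij_id[of n s i] mono into by simp
    next
      case False then show ?thesis using permutes_not_in[OF sp] by simp
    qed
  qed
qed

lemma lookup_alt_sdec:
  assumes g: "sdec n g" and h: "sdec n h"
  shows "lk (alt n g) h = (if g = h then 1 else 0)"
proof -
  have "lk (alt n g) h = (\<Sum>s\<in>Perms n. if mk s g = h then sign s else 0)"
    unfolding alt_def lookup_sum by (simp add: lookup_single when_def)
  also have "\<dots> = (\<Sum>s\<in>Perms n. if s = id \<and> g = h then 1 else 0)"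
  proof (rule sum.cong[OF refl])
    fix s assume s: "s \<in> Perms n"
    show "(if mk s g = h then sign s else 0) = (if s = id \<and> g = h then 1 else 0)"
    proof (cases "mk s g = h")
      case True
      then have "s = id" using perm_sdec_id[OF s g] h by simp
      then show ?thesis using True by (simp add: id_def map_key_id)
    next
      case False
      then show ?thesis by (auto simp: map_key_id id_def)
    qed
  qed
  also have "\<dots> = (if g = h then 1 else 0)"
  proof -
    have "id \<in> Perms n" by (simp add: Perms_def permutes_id)
    then show ?thesis using finite_Perms by (simp add: sum.If_cases)
  qed
  finally show ?thesis .
qed


definition cj :: "nat list \<Rightarrow> (nat \<times> nat \<Rightarrow> nat) \<Rightarrow> nat \<Rightarrow> nat \<Rightarrow> nat" where
  "cj la T j v = card {c \<in> cells la. j \<le> snd c \<and> T c = v}"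

definition colc :: "nat list \<Rightarrow> (nat \<times> nat \<Rightarrow> nat) \<Rightarrow> nat \<Rightarrow> nat \<Rightarrow> nat" where
  "colc la T j v = card {c \<in> cells la. snd c = j \<and> T c = v}"

definition decr :: "(nat \<Rightarrow> nat) \<Rightarrow> bool" where "decr f \<longleftrightarrow> (\<forall>v. f (Suc v) \<le> f v)"

definition width :: "nat list \<Rightarrow> nat" where "width la = (if la = [] then 0 else hd la)"

lemma cells_width:
  assumes "sorted_wrt (\<ge>) la" "c \<in> cells la"
  shows "snd c < width la"
proof -
  obtain i j where c: "c = (i, j)" "i < length la" "j < la ! i" using assms(2) by (cases c) (auto simp: cells_iff)
  have "la ! i \<le> la ! 0" using assms(1) c(2)
    by (cases "i = 0") (auto intro: sorted_wrt_nth_less[OF assms(1)])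
  moreover have "la \<noteq> []" using c by auto
  ultimately show ?thesis using c by (simp add: width_def hd_conv_nth)
qed

lemma finite_cells_subset: "finite {c \<in> cells la. P c}"
  using finite_cells by simp

lemma cj_split: "cj la T j v = cj la T (Suc j) v + colc la T j v"
proof -
  have "{c \<in> cells la. j \<le> snd c \<and> T c = v} =
      {c \<in> cells la. Suc j \<le> snd c \<and> T c = v} \<union> {c \<in> cells la. snd c = j \<and> T c = v}" by auto
  moreover have "{c \<in> cells la. Suc j \<le> snd c \<and> T c = v} \<inter> {c \<in> cells la. snd c = j \<and> T c = v} = {}" by auto
  ultimately show ?thesis unfolding cj_def colc_def
    by (simp add: card_Un_disjoint finite_cells_subset)
qed

lemma colc_le1:
  assumes T: "T \<in> ssyt n la" and s: "sorted_wrt (\<ge>) la"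
  shows "colc la T j v \<le> 1"
proof -
  have "\<forall>x\<in>{c \<in> cells la. snd c = j \<and> T c = v}. \<forall>y\<in>{c \<in> cells la. snd c = j \<and> T c = v}. x = y"
  proof (intro ballI)
    fix x y assume x: "x \<in> {c \<in> cells la. snd c = j \<and> T c = v}" and y: "y \<in> {c \<in> cells la. snd c = j \<and> T c = v}"
    obtain i where xi: "x = (i, j)" using x by (cases x) auto
    obtain i' where yi: "y = (i', j)" using y by (cases y) auto
    have "\<not> i < i'" using ssyt_col[OF T s, of i' j i] x y xi yi by auto
    moreover have "\<not> i' < i" using ssyt_col[OF T s, of i j i'] x y xi yi by auto
    ultimately show "x = y" using xi yi by simp
  qed
  then show ?thesis unfolding colc_def using card_le_Suc0_iff_eq[OF finite_cells_subset] by simp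
qed

lemma cj_zero:
  assumes "sorted_wrt (\<ge>) la" "width la \<le> j"
  shows "cj la T j v = 0"
proof -
  have "{c \<in> cells la. j \<le> snd c \<and> T c = v} = {}" using cells_width[OF assms(1)] assms(2) by fastforce
  then show ?thesis unfolding cj_def by (metis card.empty)
qed

definition Jb :: "nat list \<Rightarrow> (nat \<times> nat \<Rightarrow> nat) \<Rightarrow> nat" where
  "Jb la T = Max {j. \<not> decr (cj la T j)}"

definition Kb :: "nat list \<Rightarrow> (nat \<times> nat \<Rightarrow> nat) \<Rightarrow> nat" where
  "Kb la T = (LEAST v. cj la T (Jb la T) v < cj la T (Jb la T) (Suc v))"

definition restr :: "nat \<Rightarrow> (nat \<times> nat \<Rightarrow> nat) \<Rightarrow> nat \<times> nat \<Rightarrow> nat" where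
  "restr J T c = (if snd c < J then T c else 0)"

definition iota :: "nat list \<Rightarrow> (nat \<times> nat \<Rightarrow> nat) \<Rightarrow> nat \<times> nat \<Rightarrow> nat" where
  "iota la T c = (if snd c < Jb la T then bk (map (min (Jb la T)) la) (Kb la T) (restr (Jb la T) T) c else T c)"

lemma cells_min: "cells (map (min J) la) = {c \<in> cells la. snd c < J}"
  by (auto simp: cells_def)

lemma sorted_min: fixes J :: nat assumes "sorted_wrt (\<ge>) la" shows "sorted_wrt (\<ge>) (map (min J) la)"
proof -
  have "sorted_wrt (\<lambda>x y. min J y \<le> min J x) la"
    using assms by (rule sorted_wrt_mono_rel[rotated]) (auto simp: min_def)
  then show ?thesis unfolding sorted_wrt_map by simp
qed

lemma restr_ssyt:
  assumes "T \<in> ssyt n la"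
  shows "restr J T \<in> ssyt n (map (min J) la)"
  using assms unfolding ssyt_def cells_min restr_def by (auto simp: cells_iff)

locale stem =
  fixes n :: nat and la :: "nat list" and T :: "nat \<times> nat \<Rightarrow> nat"
  assumes sorted: "sorted_wrt (\<ge>) la" and T: "T \<in> ssyt n la" and bad: "\<exists>j. \<not> decr (cj la T j)"
begin

abbreviation "J \<equiv> Jb la T"
abbreviation "K \<equiv> Kb la T"
abbreviation "la' \<equiv> map (min J) la"
abbreviation "R \<equiv> restr J T"

lemma badset_finite: "finite {j. \<not> decr (cj la T j)}"
proof -
  have d: "decr (cj la T j)" if "width la \<le> j" for j using cj_zero[OF sorted that] by (simp add: decr_def)
  have "{j. \<not> decr (cj la T j)} \<subseteq> {..<width la}"
  proof
    fix j assume "j \<in> {j. \<not> decr (cj la T j)}"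
    then show "j \<in> {..<width la}" using d[of j] by (cases "width la \<le> j") auto
  qed
  then show ?thesis by (rule finite_subset) simp
qed

lemma J_bad: "\<not> decr (cj la T J)"
  using Max_in[OF badset_finite] bad unfolding Jb_def by auto

lemma J_max: "J < j \<Longrightarrow> decr (cj la T j)"
  using Max_ge[OF badset_finite, of j] unfolding Jb_def by (auto simp: not_le[symmetric])

lemma K_prop: "cj la T J K < cj la T J (Suc K)"
proof -
  have "\<exists>v. cj la T J v < cj la T J (Suc v)" using J_bad by (auto simp: decr_def not_le)
  then show ?thesis unfolding Kb_def by (rule LeastI_ex)
qed

lemma JK_facts: "colc la T J K = 0" "colc la T J (Suc K) = 1" "cj la T J (Suc K) = Suc (cj la T J K)"
proof -
  have d: "cj la T (Suc J) (Suc K) \<le> cj la T (Suc J) K" using J_max[of "Suc J"] by (simp add: decr_def)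
  have c1: "colc la T J (Suc K) \<le> 1" "colc la T J K \<le> 1" using colc_le1[OF T sorted] by auto
  have kp: "cj la T (Suc J) K + colc la T J K < cj la T (Suc J) (Suc K) + colc la T J (Suc K)"
    using K_prop cj_split[of la T J] by simp
  show "colc la T J K = 0" "colc la T J (Suc K) = 1" using d c1 kp by linarith+
  then show "cj la T J (Suc K) = Suc (cj la T J K)" using d kp cj_split[of la T J] by simp
qed

lemma col_noK: "(i, J) \<in> cells la \<Longrightarrow> T (i, J) \<noteq> K"
proof
  assume h: "(i, J) \<in> cells la" "T (i, J) = K"
  have "0 < card {c \<in> cells la. snd c = J \<and> T c = K}"
    using h by (subst card_gt_0_iff) (auto simp: finite_cells_subset)
  then have "card {c \<in> cells la. snd c = J \<and> T c = K} \<noteq> 0" by simp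
  then show False using JK_facts(1) by (simp add: colc_def)
qed

lemma SucK_n: "Suc K < n"
proof -
  have "card {c \<in> cells la. snd c = J \<and> T c = Suc K} \<noteq> 0" using JK_facts(2) by (simp add: colc_def)
  then have "{c \<in> cells la. snd c = J \<and> T c = Suc K} \<noteq> {}" by (metis card.empty)
  then obtain c where c: "c \<in> cells la" "T c = Suc K" by blast
  show ?thesis using ssytD(1)[OF T c(1)] c(2) by simp
qed

lemma bkl: "bkloc n la' K R"
  using sorted_min[OF sorted] restr_ssyt[OF T] SucK_n by (simp add: bkloc_def)

abbreviation "B' \<equiv> bk la' K R"

lemma B'_cases: "B' c = R c \<or> (free la' K R c \<and> (B' c = K \<or> B' c = Suc K) \<and> (R c = K \<or> R c = Suc K))"
  using bkloc.bk_nonfree[OF bkl] bkloc.bk_free_val[OF bkl] bkloc.free_val[OF bkl] by blast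

lemma B'_ssyt: "B' \<in> ssyt n la'" using bkloc.bk_ssyt[OF bkl] .

lemma iota_eq: "iota la T c = (if snd c < J then B' c else T c)"
  by (simp add: iota_def)

lemma iota_ssyt: "iota la T \<in> ssyt n la"
proof -
  note BS = ssytD[OF B'_ssyt]
  have cl: "c \<in> cells la'" if "c \<in> cells la" "snd c < J" for c using that cells_min by auto
  have 1: "iota la T c < n" if "c \<in> cells la" for c
    using that BS(1)[OF cl[OF that]] ssytD(1)[OF T that] by (simp add: iota_eq)
  have 2: "iota la T c = 0" if "c \<notin> cells la" for c
  proof -
    have "c \<notin> cells la'" using that cells_min by auto
    then show ?thesis using BS(2) ssytD(2)[OF T that] by (simp add: iota_eq)
  qed
  have 3: "iota la T (i, j) \<le> iota la T (i, Suc j)" if c: "(i, Suc j) \<in> cells la" for i j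
  proof -
    consider "Suc j < J" | "Suc j = J" | "J < Suc j" by linarith
    then show ?thesis
    proof cases
      case 1
      then have "(i, Suc j) \<in> cells la'" using c cells_min by auto
      then show ?thesis using BS(3) 1 by (simp add: iota_eq)
    next
      case 2
      have cj: "(i, j) \<in> cells la" using c by (auto simp: cells_iff)
      have r: "T (i, j) \<le> T (i, Suc j)" using ssytD(3)[OF T c] .
      have nk: "T (i, Suc j) \<noteq> K" using col_noK c 2 by simp
      have Rij: "R (i, j) = T (i, j)" using 2 by (simp add: restr_def)
      have "B' (i, j) \<le> T (i, Suc j)" using B'_cases[of "(i, j)"] r nk Rij by auto
      then show ?thesis using 2 by (simp add: iota_eq)
    next
      case 3
      then show ?thesis using ssytD(3)[OF T c] by (simp add: iota_eq)
    qed
  qed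
  have 4: "iota la T (i, j) < iota la T (Suc i, j)" if c: "(Suc i, j) \<in> cells la" for i j
  proof (cases "j < J")
    case True
    then have "(Suc i, j) \<in> cells la'" using c cells_min by auto
    then show ?thesis using BS(4) True by (simp add: iota_eq)
  next
    case False
    then show ?thesis using ssytD(4)[OF T c] by (simp add: iota_eq)
  qed
  show ?thesis using 1 2 3 4 by (simp add: ssyt_def)
qed

lemma cj_iota: "J \<le> j \<Longrightarrow> cj la (iota la T) j = cj la T j"
  unfolding cj_def by (intro ext arg_cong[where f = card]) (auto simp: iota_eq)

lemma iota_bad: "\<not> decr (cj la (iota la T) J)"
  using J_bad cj_iota by simp

lemma J_iota: "Jb la (iota la T) = J"
proof -
  have "{j. \<not> decr (cj la (iota la T) j)} \<subseteq> {..J}"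
  proof
    fix j assume j: "j \<in> {j. \<not> decr (cj la (iota la T) j)}"
    show "j \<in> {..J}"
    proof (rule ccontr)
      assume "j \<notin> {..J}"
      then have "J < j" by simp
      then show False using J_max[of j] cj_iota[of j] j by simp
    qed
  qed
  moreover have "J \<in> {j. \<not> decr (cj la (iota la T) j)}" using iota_bad by simp
  ultimately have "Max {j. \<not> decr (cj la (iota la T) j)} = J"
    by (intro Max_eqI) (auto intro: finite_subset[of _ "{..J}"])
  then show ?thesis by (simp add: Jb_def)
qed

lemma K_iota: "Kb la (iota la T) = K"
  unfolding Kb_def J_iota cj_iota[OF order.refl] by simp

lemma restr_iota: "restr J (iota la T) = B'"
proof
  fix c :: "nat \<times> nat"
  show "restr J (iota la T) c = B' c"
  proof (cases "snd c < J")
    case False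
    then have "c \<notin> cells la'" using cells_min by auto
    then show ?thesis using ssytD(2)[OF B'_ssyt] False by (simp add: restr_def)
  qed (simp add: restr_def iota_eq)
qed

lemma iota_invol: "iota la (iota la T) = T"
proof
  fix c :: "nat \<times> nat"
  have "iota la (iota la T) c = (if snd c < J then bk la' K B' c else iota la T c)"
    unfolding iota_def J_iota K_iota restr_iota by simp
  also have "\<dots> = T c"
    using bkloc.bk_invol[OF bkl] by (simp add: iota_eq restr_def)
  finally show "iota la (iota la T) c = T c" .
qed

lemma cnt_decomp:
  "cnt la X v = cnt la' X v + cj la X J v"
proof -
  have "{c \<in> cells la. X c = v} = {c \<in> cells la'. X c = v} \<union> {c \<in> cells la. J \<le> snd c \<and> X c = v}"
    using cells_min by auto
  moreover have "{c \<in> cells la'. X c = v} \<inter> {c \<in> cells la. J \<le> snd c \<and> X c = v} = {}"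
    using cells_min by auto
  ultimately show ?thesis unfolding cnt_def cj_def
    by (simp add: card_Un_disjoint finite_cells_subset)
qed

lemma cnt_la'_cong: "(\<And>c. c \<in> cells la' \<Longrightarrow> X c = Y c) \<Longrightarrow> cnt la' X v = cnt la' Y v"
  unfolding cnt_def by (intro arg_cong[where f = card]) auto

lemma cnt_iota: "cnt la (iota la T) v = cnt la' R (Transposition.transpose K (Suc K) v) + cj la T J v"
proof -
  have "cnt la (iota la T) v = cnt la' B' v + cj la T J v"
    using cnt_decomp[of "iota la T" v] cj_iota[OF order.refl]
      cnt_la'_cong[of "iota la T" B' v] cells_min by (auto simp: iota_eq)
  also have "cnt la' B' v = cnt la' R (Transposition.transpose K (Suc K) v)"
    by (rule bkloc.cnt_bk[OF bkl])
  finally show ?thesis .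
qed

lemma cnt_T: "cnt la T v = cnt la' R v + cj la T J v"
  using cnt_decomp[of T v] cnt_la'_cong[of T R v] cells_min by (auto simp: restr_def)

end

definition delta :: "nat \<Rightarrow> (nat \<Rightarrow>\<^sub>0 nat)" where
  "delta n = Abs_poly_mapping (\<lambda>i. if i < n then n - 1 - i else 0)"

lemma lookup_delta: "lk (delta n) i = (if i < n then n - 1 - i else 0)"
proof -
  have "finite {i. (if i < n then n - 1 - i else 0) \<noteq> 0}"
    by (rule finite_subset[of _ "{..<n}"]) auto
  then show ?thesis unfolding delta_def by (simp add: Abs_poly_mapping_inverse)
qed

lemma (in stem) content_iota:
  "delta n + tableau_content la (iota la T) = mk (Transposition.transpose K (Suc K)) (delta n + tableau_content la T)"
proof (rule poly_mapping_eqI)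
  fix v
  let ?t = "Transposition.transpose K (Suc K)"
  have key: "lk (delta n) v + cj la T J v = lk (delta n) (?t v) + cj la T J (?t v)"
  proof -
    have "lk (delta n) K = Suc (lk (delta n) (Suc K))" using SucK_n by (simp add: lookup_delta)
    then show ?thesis using JK_facts(3) by (auto simp: transpose_def)
  qed
  have "lk (delta n + tableau_content la (iota la T)) v = lk (delta n) v + cnt la' R (?t v) + cj la T J v"
    by (simp add: lookup_add lookup_content cnt_iota)
  also have "\<dots> = lk (delta n) (?t v) + cnt la' R (?t v) + cj la T J (?t v)" using key by simp
  also have "\<dots> = lk (mk ?t (delta n + tableau_content la T)) v"
    by (simp add: map_key.rep_eq[OF inj_transpose] lookup_add lookup_content cnt_T)
  finally show "lk (delta n + tableau_content la (iota la T)) v = lk (mk ?t (delta n + tableau_content la T)) v" .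
qed

lemma (in stem) alt_iota:
  "alt n (delta n + tableau_content la (iota la T)) = - alt n (delta n + tableau_content la T)"
proof -
  have t: "Transposition.transpose K (Suc K) \<in> Perms n" using SucK_n by (simp add: Perms_def permutes_swap_id)
  show ?thesis unfolding content_iota alt_mk[OF t] by (simp add: sign_swap_id)
qed


definition T0 :: "nat list \<Rightarrow> nat \<times> nat \<Rightarrow> nat" where
  "T0 la c = (if c \<in> cells la then fst c else 0)"

definition pvec :: "nat list \<Rightarrow> (nat \<Rightarrow>\<^sub>0 nat)" where
  "pvec la = Abs_poly_mapping (\<lambda>i. if i < length la then la ! i else 0)"

lemma lookup_pvec: "lk (pvec la) i = (if i < length la then la ! i else 0)"
proof -
  have "finite {i. (if i < length la then la ! i else 0) \<noteq> 0}"
    by (rule finite_subset[of _ "{..<length la}"]) auto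
  then show ?thesis unfolding pvec_def by (simp add: Abs_poly_mapping_inverse)
qed

lemma T0_ssyt:
  assumes s: "sorted_wrt (\<ge>) la" and l: "length la \<le> n"
  shows "T0 la \<in> ssyt n la"
proof -
  have "(i, j) \<in> cells la" if "(Suc i, j) \<in> cells la" for i j using young[OF s that] by simp
  then show ?thesis using l by (auto simp: ssyt_def T0_def cells_iff)
qed

lemma cj_T0: "cj la (T0 la) j v = (if v < length la then la ! v - j else 0)"
proof -
  have "{c \<in> cells la. j \<le> snd c \<and> T0 la c = v} = (if v < length la then {v} \<times> {j..<la ! v} else {})"
    by (auto simp: T0_def cells_iff)
  then show ?thesis unfolding cj_def by simp
qed

lemma cnt_T0: "cnt la (T0 la) v = (if v < length la then la ! v else 0)"
proof -
  have "{c \<in> cells la. T0 la c = v} = (if v < length la then {v} \<times> {..<la ! v} else {})"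
    by (auto simp: T0_def cells_iff)
  then show ?thesis unfolding cnt_def by simp
qed

lemma content_T0: "tableau_content la (T0 la) = pvec la"
  by (rule poly_mapping_eqI) (simp add: lookup_content cnt_T0 lookup_pvec)

lemma T0_good:
  assumes s: "sorted_wrt (\<ge>) la"
  shows "decr (cj la (T0 la) j)"
  unfolding decr_def
proof
  fix v
  show "cj la (T0 la) j (Suc v) \<le> cj la (T0 la) j v"
  proof (cases "Suc v < length la")
    case True
    then have "la ! Suc v \<le> la ! v" using sorted_wrt_nth_less[OF s, of v "Suc v"] by simp
    then show ?thesis using True by (simp add: cj_T0 diff_le_mono)
  qed (simp add: cj_T0)
qed

lemma good_canon:
  assumes T: "T \<in> ssyt n la" and s: "sorted_wrt (\<ge>) la" and good: "\<And>j. decr (cj la T j)"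
  shows "\<forall>i j'. (i, j') \<in> cells la \<longrightarrow> j \<le> j' \<longrightarrow> T (i, j') = i"
proof (induction "width la - j" arbitrary: j)
  case 0
  show ?case
  proof (intro allI impI)
    fix i j' assume "(i, j') \<in> cells la" "j \<le> j'"
    then show "T (i, j') = i" using cells_width[OF s, of "(i, j')"] 0 by simp
  qed
next
  case (Suc m)
  have IH: "\<And>i j'. (i, j') \<in> cells la \<Longrightarrow> Suc j \<le> j' \<Longrightarrow> T (i, j') = i"
    using Suc.hyps(1)[of "Suc j"] Suc.hyps(2) by simp
  have col: "T (i, j) = i" if ij: "(i, j) \<in> cells la" for i
  proof (rule ccontr)
    assume "T (i, j) \<noteq> i"
    then have ex: "\<exists>i. (i, j) \<in> cells la \<and> T (i, j) \<noteq> i" using ij by blast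
    define i0 where "i0 = (LEAST i. (i, j) \<in> cells la \<and> T (i, j) \<noteq> i)"
    have i0: "(i0, j) \<in> cells la" "T (i0, j) \<noteq> i0"
      using LeastI_ex[OF ex] unfolding i0_def by auto
    have below: "T (i, j) = i" if "i < i0" "(i, j) \<in> cells la" for i
      using not_less_Least[of i "\<lambda>i. (i, j) \<in> cells la \<and> T (i, j) \<noteq> i"] that unfolding i0_def by blast
    define v where "v = T (i0, j)"
    have vgt: "i0 < v" using ssyt_ge_row[OF T s i0(1)] i0(2) unfolding v_def by simp
    have nc: "(i0, Suc j) \<notin> cells la"
    proof
      assume h: "(i0, Suc j) \<in> cells la"
      have "T (i0, j) \<le> T (i0, Suc j)" using ssytD(3)[OF T h] .
      then show False using IH[OF h order.refl] vgt unfolding v_def by simp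
    qed
    have "cj la T j v > 0"
      unfolding cj_def using i0(1) v_def by (subst card_gt_0_iff) (auto simp: finite_cells_subset)
    moreover have "cj la T j (v - 1) = 0"
    proof -
      have "{c \<in> cells la. j \<le> snd c \<and> T c = v - 1} = {}"
      proof (rule ccontr)
        assume "{c \<in> cells la. j \<le> snd c \<and> T c = v - 1} \<noteq> {}"
        then obtain i j' where c: "(i, j') \<in> cells la" "j \<le> j'" "T (i, j') = v - 1" by auto
        show False
        proof (cases "j' = j")
          case False
          then have "Suc j \<le> j'" using c by simp
          then have "T (i, j') = i" using IH c(1) by simp
          then have "i0 \<le> i" using c(3) vgt by simp
          then have "(i0, Suc j) \<in> cells la" using young[OF s c(1)] \<open>Suc j \<le> j'\<close> by simp
          then show False using nc by simp
        next
          case True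
          consider "i < i0" | "i = i0" | "i0 < i" by linarith
          then show False
          proof cases
            case 1 then show False using below[of i] c True vgt by simp
          next
            case 2 then show False using c True vgt v_def by simp
          next
            case 3
            have "T (i0, j) < T (i, j)" using ssyt_col[OF T s, of i j i0] c True 3 by simp
            then show False using c True v_def by simp
          qed
        qed
      qed
      then show ?thesis unfolding cj_def by (metis card.empty)
    qed
    moreover have "cj la T j v \<le> cj la T j (v - 1)"
      using good[of j] vgt unfolding decr_def by (metis Suc_pred' gr0I less_nat_zero_code)
    ultimately show False by simp
  qed
  show ?case
  proof (intro allI impI)
    fix i j' assume p: "(i, j') \<in> cells la" "j \<le> j'"
    show "T (i, j') = i"
    proof (cases "j' = j")
      case True then show ?thesis using col p by simp
    next
      case False then show ?thesis using IH p by simp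
    qed
  qed
qed

lemma good_eq_T0:
  assumes T: "T \<in> ssyt n la" and s: "sorted_wrt (\<ge>) la" and good: "\<And>j. decr (cj la T j)"
  shows "T = T0 la"
proof
  fix c :: "nat \<times> nat"
  show "T c = T0 la c"
  proof (cases "c \<in> cells la")
    case True
    obtain i j where c: "c = (i, j)" by (cases c)
    show ?thesis using good_canon[OF T s good, of 0] True c by (simp add: T0_def)
  next
    case False then show ?thesis using ssytD(2)[OF T False] by (simp add: T0_def)
  qed
qed

lemma invol_sum_zero:
  assumes "finite A" "\<And>x. x \<in> A \<Longrightarrow> f x \<in> A" "\<And>x. x \<in> A \<Longrightarrow> f (f x) = x"
    "\<And>x. x \<in> A \<Longrightarrow> w (f x) = - (w x :: ipoly)"
  shows "(\<Sum>x\<in>A. w x) = 0"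
proof -
  have "(\<Sum>x\<in>A. w x) = (\<Sum>x\<in>A. w (f x))"
    by (rule sum.reindex_bij_witness[where i = f and j = f]) (use assms in auto)
  also have "\<dots> = - (\<Sum>x\<in>A. w x)" using assms(4) by (simp add: sum_negf)
  finally show ?thesis by (rule two_zero)
qed

lemma sum_alt_ssyt:
  assumes s: "sorted_wrt (\<ge>) la" and l: "length la \<le> n"
  shows "(\<Sum>T\<in>ssyt n la. alt n (delta n + tableau_content la T)) = alt n (delta n + pvec la)"
proof -
  let ?A = "{T \<in> ssyt n la. \<exists>j. \<not> decr (cj la T j)}"
  have split: "ssyt n la = insert (T0 la) ?A"
  proof
    show "ssyt n la \<subseteq> insert (T0 la) ?A"
    proof
      fix T assume T: "T \<in> ssyt n la"
      show "T \<in> insert (T0 la) ?A"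
      proof (cases "\<exists>j. \<not> decr (cj la T j)")
        case True then show ?thesis using T by blast
      next
        case False
        then have "T = T0 la" using good_eq_T0[OF T s] by blast
        then show ?thesis by blast
      qed
    qed
    show "insert (T0 la) ?A \<subseteq> ssyt n la" using T0_ssyt[OF s l] by blast
  qed
  have notin: "T0 la \<notin> ?A" using T0_good[OF s] by auto
  have finA: "finite ?A" using finite_ssyt by simp
  have stemA: "stem n la T" if "T \<in> ?A" for T using that s by (simp add: stem_def)
  have zero: "(\<Sum>T\<in>?A. alt n (delta n + tableau_content la T)) = 0"
  proof (rule invol_sum_zero[OF finA, where f = "iota la"])
    fix T assume "T \<in> ?A"
    note st = stemA[OF this]
    show "iota la T \<in> ?A" using stem.iota_ssyt[OF st] stem.iota_bad[OF st] by auto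
    show "iota la (iota la T) = T" by (rule stem.iota_invol[OF st])
    show "alt n (delta n + tableau_content la (iota la T)) = - alt n (delta n + tableau_content la T)"
      by (rule stem.alt_iota[OF st])
  qed
  have "(\<Sum>T\<in>insert (T0 la) ?A. alt n (delta n + tableau_content la T))
      = alt n (delta n + tableau_content la (T0 la)) + (\<Sum>T\<in>?A. alt n (delta n + tableau_content la T))"
    by (rule sum.insert[OF finA notin])
  moreover have "(\<Sum>T\<in>ssyt n la. alt n (delta n + tableau_content la T))
      = (\<Sum>T\<in>insert (T0 la) ?A. alt n (delta n + tableau_content la T))"
    by (rule arg_cong[where f = "sum (\<lambda>T. alt n (delta n + tableau_content la T))", OF split])
  ultimately show ?thesis using zero content_T0 by simp
qed

lemma keys_schur_img: "Poly_Mapping.keys (schur n la) = tableau_content la ` ssyt n la"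
proof -
  have "b \<in> Poly_Mapping.keys (schur n la) \<longleftrightarrow> {T \<in> ssyt n la. tableau_content la T = b} \<noteq> {}" for b
    using finite_ssyt by (simp add: in_keys_iff lookup_schur)
  then show ?thesis by auto
qed

lemma bialt:
  assumes s: "sorted_wrt (\<ge>) la" and l: "length la \<le> n"
  shows "alt n (delta n) * schur n la = alt n (delta n + pvec la)"
proof -
  let ?S = "ssyt n la" and ?c = "tableau_content la"
  have "alt n (delta n) * schur n la
      = (\<Sum>b\<in>Poly_Mapping.keys (schur n la). of_int (lk (schur n la) b) * alt n (delta n + b))"
    by (rule alt_mult_sym[OF symmetric_schur[OF s]])
  also have "\<dots> = (\<Sum>b\<in>?c ` ?S. of_nat (card {T \<in> ?S. ?c T = b}) * alt n (delta n + b))"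
    unfolding keys_schur_img by (simp add: lookup_schur)
  also have "\<dots> = (\<Sum>b\<in>?c ` ?S. \<Sum>T\<in>{T \<in> ?S. ?c T = b}. alt n (delta n + ?c T))"
    by (intro sum.cong refl) (simp add: sum_constant)
  also have "\<dots> = (\<Sum>T\<in>?S. alt n (delta n + ?c T))"
    by (rule sum.image_gen[symmetric]) (rule finite_ssyt)
  also have "\<dots> = alt n (delta n + pvec la)" by (rule sum_alt_ssyt[OF s l])
  finally show ?thesis .
qed


lemma lookup_of_int_mult: "lk (of_int c * p :: ipoly) x = c * lk p x"
proof -
  have "(of_int c :: ipoly) * p = Poly_Mapping.map ((*) c) p"
    by (simp add: mult_map_scale_conv_mult single_of_int[symmetric] del: single_of_int)
  then show ?thesis by (simp add: map.rep_eq when_def)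
qed

lemma pvec_zero: "length la \<le> i \<Longrightarrow> lk (pvec la) i = 0"
  by (simp add: lookup_pvec)

lemma sdec_pvec:
  assumes "sorted_wrt (\<ge>) la"
  shows "sdec n (delta n + pvec la)"
  unfolding sdec_def
proof (intro allI impI)
  fix i j assume ij: "i < j" "j < n"
  have "lk (pvec la) j \<le> lk (pvec la) i"
    using sorted_wrt_nth_less[OF assms ij(1)] ij by (auto simp: lookup_pvec)
  then show "lk (delta n + pvec la) j < lk (delta n + pvec la) i"
    using ij by (simp add: lookup_add lookup_delta)
qed

lemma partition_pos: "partition la \<Longrightarrow> i < length la \<Longrightarrow> 0 < la ! i"
  unfolding partition_def by (metis gr0I nth_mem)

lemma pvec_inj:
  assumes "partition la" "partition mu" "pvec la = pvec mu"
  shows "la = mu"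
proof -
  have pos: "0 < lk (pvec x) i \<longleftrightarrow> i < length x" if "partition x" for x i
    using partition_pos[OF that] by (auto simp: lookup_pvec)
  have "length la = length mu"
  proof (rule ccontr)
    assume "length la \<noteq> length mu"
    then consider "length la < length mu" | "length mu < length la" by linarith
    then show False
    proof cases
      case 1
      have "0 < lk (pvec mu) (length la)" using pos[OF assms(2)] 1 by simp
      moreover have "\<not> 0 < lk (pvec la) (length la)" using pos[OF assms(1)] by simp
      ultimately show False using assms(3) by simp
    next
      case 2
      have "0 < lk (pvec la) (length mu)" using pos[OF assms(1)] 2 by simp
      moreover have "\<not> 0 < lk (pvec mu) (length mu)" using pos[OF assms(2)] by simp
      ultimately show False using assms(3) by simp
    qed
  qed
  moreover have "la ! i = mu ! i" if "i < length la" for i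
    using arg_cong[OF assms(3), of "\<lambda>p. lk p i"] that \<open>length la = length mu\<close> by (simp add: lookup_pvec)
  ultimately show ?thesis by (rule nth_equalityI)
qed

lemma delta_pvec_inj:
  assumes "partition la" "partition mu" "delta n + pvec la = delta n + pvec mu"
  shows "la = mu"
  using pvec_inj[OF assms(1,2)] assms(3) by simp

lemma vec_to_part:
  assumes dec: "\<And>i. Suc i < n \<Longrightarrow> lk v (Suc i) \<le> lk v i" and out: "\<And>i. n \<le> i \<Longrightarrow> lk v i = 0"
  shows "\<exists>mu \<in> partitions_le n. pvec mu = v"
proof -
  let ?S = "{i. i < n \<and> 0 < lk v i}"
  have decg: "lk v j \<le> lk v i" if "i \<le> j" "j < n" for i j
    using that
  proof (induction j)
    case (Suc j)
    then show ?case using dec[of j] by (cases "i = Suc j") auto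
  qed simp
  have S: "?S = {..<card ?S}"
  proof (rule downclosed_eq)
    show "finite ?S" by simp
    fix j j' assume "j \<le> j'" "j' \<in> ?S"
    then show "j \<in> ?S" using decg[of j j'] by auto
  qed
  define L where "L = card ?S"
  have Ln: "L \<le> n"
  proof -
    have "?S \<subseteq> {..<n}" by auto
    from card_mono[OF finite_lessThan this] show ?thesis unfolding L_def by simp
  qed
  have memS: "i < L \<longleftrightarrow> i < n \<and> 0 < lk v i" for i
  proof -
    have "i \<in> ?S \<longleftrightarrow> i \<in> {..<card ?S}" using S by (rule eqset_imp_iff)
    then show ?thesis by (simp add: L_def)
  qed
  define mu where "mu = map (lk v) [0..<L]"
  have "partition mu"
    unfolding partition_def mu_def
  proof
    show "sorted_wrt (\<ge>) (map (lk v) [0..<L])"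
      unfolding sorted_wrt_iff_nth_less
    proof (intro allI impI)
      fix i j assume ij: "i < j" "j < length (map (lk v) [0..<L])"
      then have "j < L" by simp
      then show "map (lk v) [0..<L] ! j \<le> map (lk v) [0..<L] ! i" using decg[of i j] Ln ij by simp
    qed
    show "0 \<notin> set (map (lk v) [0..<L])"
    proof
      assume "0 \<in> set (map (lk v) [0..<L])"
      then obtain i where "i < L" "lk v i = 0" by auto
      then show False using memS[of i] by simp
    qed
  qed
  moreover have "length mu \<le> n" using Ln by (simp add: mu_def)
  moreover have "pvec mu = v"
  proof (rule poly_mapping_eqI)
    fix i
    show "lk (pvec mu) i = lk v i"
    proof (cases "i < L")
      case True then show ?thesis by (simp add: lookup_pvec mu_def)
    next
      case False
      then have "lk v i = 0" using memS out by (cases "i < n") auto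
      then show ?thesis using False by (simp add: lookup_pvec mu_def)
    qed
  qed
  ultimately have "mu \<in> partitions_le n" "pvec mu = v" by (auto simp: partitions_le_def)
  then show ?thesis by blast
qed

lemma sort_perm:
  assumes inj: "\<And>i j. i < n \<Longrightarrow> j < n \<Longrightarrow> i \<noteq> j \<Longrightarrow> lk g i \<noteq> lk g j"
  shows "\<exists>s\<in>Perms n. sdec n (mk s g)"
proof -
  define rk where "rk i = (if i < n then card {j. j < n \<and> lk g i < lk g j} else i)" for i
  have rk_lt: "rk i < n" if "i < n" for i
  proof -
    have sub: "{j. j < n \<and> lk g i < lk g j} \<subset> {..<n}" using that by auto
    have "card {j. j < n \<and> lk g i < lk g j} < card {..<n}" by (rule psubset_card_mono[OF finite_lessThan sub])
    then show ?thesis unfolding rk_def using that by simp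
  qed
  have rk_mono: "rk b < rk a" if "a < n" "b < n" "lk g a < lk g b" for a b
  proof -
    have sub: "{j. j < n \<and> lk g b < lk g j} \<subset> {j. j < n \<and> lk g a < lk g j}" using that by auto
    have "card {j. j < n \<and> lk g b < lk g j} < card {j. j < n \<and> lk g a < lk g j}"
      by (rule psubset_card_mono[OF _ sub]) simp
    then show ?thesis unfolding rk_def using that by simp
  qed
  have rk_inj: "inj_on rk {..<n}"
  proof (rule inj_onI)
    fix a b assume ab: "a \<in> {..<n}" "b \<in> {..<n}" "rk a = rk b"
    show "a = b"
    proof (rule ccontr)
      assume "a \<noteq> b"
      then have ne: "lk g a \<noteq> lk g b" using inj ab by simp
      show False
      proof (cases "lk g a < lk g b")
        case True then show False using rk_mono[of a b] ab by simp
      next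
        case False
        then have "lk g b < lk g a" using ne by simp
        then show False using rk_mono[of b a] ab by simp
      qed
    qed
  qed
  have img: "rk ` {..<n} \<subseteq> {..<n}" using rk_lt by auto
  have "rk ` {..<n} = {..<n}" by (rule endo_inj_surj[OF finite_lessThan img rk_inj])
  then have "bij_betw rk {..<n} {..<n}" using rk_inj by (simp add: bij_betw_def)
  then have rp: "rk permutes {..<n}" by (rule bij_imp_permutes) (simp add: rk_def)
  define s where "s = inv rk"
  have sp: "s permutes {..<n}" unfolding s_def by (rule permutes_inv[OF rp])
  have rs: "rk (s i) = i" for i unfolding s_def using permutes_inverses(1)[OF rp] by simp
  have sin: "s i < n" if "i < n" for i using permutes_in_image[OF sp] that by simp
  have "sdec n (mk s g)"
    unfolding sdec_def
  proof (intro allI impI)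
    fix i j assume ij: "i < j" "j < n"
    have l1: "lk (mk s g) j = lk g (s j)" "lk (mk s g) i = lk g (s i)"
      by (simp_all add: map_key.rep_eq[OF permutes_inj[OF sp]])
    have ne: "s i \<noteq> s j"
    proof
      assume "s i = s j"
      then have "rk (s i) = rk (s j)" by simp
      then show False using ij rs[of i] rs[of j] by simp
    qed
    have "lk g (s j) < lk g (s i)"
    proof (rule ccontr)
      assume a: "\<not> lk g (s j) < lk g (s i)"
      have "lk g (s i) \<noteq> lk g (s j)" using inj[OF sin sin ne] ij by simp
      then have "lk g (s i) < lk g (s j)" using a by simp
      then have "rk (s j) < rk (s i)" using rk_mono[of "s i" "s j"] sin ij by simp
      then show False using ij rs[of i] rs[of j] by simp
    qed
    then show "lk (mk s g) j < lk (mk s g) i" using l1 by simp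
  qed
  then show ?thesis using sp by (auto simp: Perms_def)
qed

lemma sdec_delta: "sdec n (delta n)"
  unfolding sdec_def by (auto simp: lookup_delta)

lemma alt_delta_nz: "alt n (delta n) \<noteq> 0"
proof -
  have "lk (alt n (delta n)) (delta n) = 1" using lookup_alt_sdec[OF sdec_delta sdec_delta] by simp
  then show ?thesis by auto
qed

lemma alt_delta_cancel: "alt n (delta n) * p = alt n (delta n) * q \<Longrightarrow> p = q"
  using alt_delta_nz by simp


definition SE :: "nat \<Rightarrow> (nat list \<Rightarrow> int) \<Rightarrow> ipoly" where
  "SE n c = (\<Sum>la\<in>{la. c la \<noteq> 0}. of_int (c la) * schur n la)"

definition okc :: "nat \<Rightarrow> (nat list \<Rightarrow> int) \<Rightarrow> bool" where
  "okc n c \<longleftrightarrow> finite {la. c la \<noteq> 0} \<and> (\<forall>la. c la \<noteq> 0 \<longrightarrow> la \<in> partitions_le n)"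

lemma part_sorted: "la \<in> partitions_le n \<Longrightarrow> sorted_wrt (\<ge>) la"
  by (simp add: partitions_le_def partition_def)

lemma part_len: "la \<in> partitions_le n \<Longrightarrow> length la \<le> n"
  by (simp add: partitions_le_def)

lemma part_part: "la \<in> partitions_le n \<Longrightarrow> partition la"
  by (simp add: partitions_le_def)

lemma lookup_SE_alt:
  assumes ok: "okc n c" and mu: "mu \<in> partitions_le n"
  shows "lk (alt n (delta n) * SE n c) (delta n + pvec mu) = c mu"
proof -
  let ?S = "{la. c la \<noteq> 0}"
  have fin: "finite ?S" using ok by (simp add: okc_def)
  have P: "la \<in> partitions_le n" if "la \<in> ?S" for la using ok that by (simp add: okc_def)
  have "alt n (delta n) * SE n c = (\<Sum>la\<in>?S. of_int (c la) * alt n (delta n + pvec la))"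
    unfolding SE_def sum_distrib_left
    by (intro sum.cong refl) (simp add: mult.left_commute bialt[OF part_sorted[OF P] part_len[OF P]])
  then have "lk (alt n (delta n) * SE n c) (delta n + pvec mu)
      = (\<Sum>la\<in>?S. c la * lk (alt n (delta n + pvec la)) (delta n + pvec mu))"
    by (simp add: lookup_sum lookup_of_int_mult)
  also have "\<dots> = (\<Sum>la\<in>?S. if la = mu then c la else 0)"
  proof (intro sum.cong refl)
    fix la assume la: "la \<in> ?S"
    have "lk (alt n (delta n + pvec la)) (delta n + pvec mu) = (if delta n + pvec la = delta n + pvec mu then 1 else 0)"
      by (rule lookup_alt_sdec[OF sdec_pvec[OF part_sorted[OF P[OF la]]] sdec_pvec[OF part_sorted[OF mu]]])
    moreover have "delta n + pvec la = delta n + pvec mu \<longleftrightarrow> la = mu"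
      using delta_pvec_inj[OF part_part[OF P[OF la]] part_part[OF mu]] by auto
    ultimately show "c la * lk (alt n (delta n + pvec la)) (delta n + pvec mu) = (if la = mu then c la else 0)"
      by simp
  qed
  also have "\<dots> = c mu" using fin by (simp add: sum.delta)
  finally show ?thesis .
qed

lemma SE_unique:
  assumes "okc n c" "okc n c'" "SE n c = SE n c'"
  shows "c = c'"
proof
  fix mu
  show "c mu = c' mu"
  proof (cases "mu \<in> partitions_le n")
    case True
    then show ?thesis using lookup_SE_alt[OF assms(1) True] lookup_SE_alt[OF assms(2) True] assms(3) by simp
  next
    case False
    then have "c mu = 0" "c' mu = 0" using assms(1,2) unfolding okc_def by blast+
    then show ?thesis by simp
  qed
qed

lemma schur_coeffs_eq:
  assumes "okc n c" "g = SE n c"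
  shows "schur_coeffs n g = c"
  unfolding schur_coeffs_def
proof (rule the_equality)
  show "finite {la. c la \<noteq> 0} \<and> (\<forall>la. c la \<noteq> 0 \<longrightarrow> la \<in> partitions_le n) \<and>
      g = (\<Sum>la\<in>{la. c la \<noteq> 0}. of_int (c la) * schur n la)"
    using assms by (simp add: okc_def SE_def)
  fix c' assume "finite {la. c' la \<noteq> 0} \<and> (\<forall>la. c' la \<noteq> 0 \<longrightarrow> la \<in> partitions_le n) \<and>
      g = (\<Sum>la\<in>{la. c' la \<noteq> 0}. of_int (c' la) * schur n la)"
  then have "okc n c'" "g = SE n c'" by (simp_all add: okc_def SE_def)
  then show "c' = c" using SE_unique[OF _ assms(1)] assms(2) by simp
qed

definition coef :: "'x set \<Rightarrow> ('x \<Rightarrow> int) \<Rightarrow> ('x \<Rightarrow> nat list) \<Rightarrow> nat list \<Rightarrow> int" where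
  "coef X w h mu = (\<Sum>x\<in>{x \<in> X. h x = mu}. w x)"

lemma regroup:
  assumes fin: "finite X" and P: "\<And>x. x \<in> X \<Longrightarrow> h x \<in> partitions_le n"
  shows "okc n (coef X w h)" "(\<Sum>x\<in>X. of_int (w x) * schur n (h x)) = SE n (coef X w h)"
proof -
  have sub: "{mu. coef X w h mu \<noteq> 0} \<subseteq> h ` X"
  proof
    fix mu assume mu: "mu \<in> {mu. coef X w h mu \<noteq> 0}"
    have "{x \<in> X. h x = mu} \<noteq> {}"
    proof
      assume e: "{x \<in> X. h x = mu} = {}"
      then have "coef X w h mu = 0" unfolding coef_def by (simp only: e sum.empty)
      with mu show False by simp
    qed
    then show "mu \<in> h ` X" by auto
  qed
  have pl: "la \<in> partitions_le n" if "coef X w h la \<noteq> 0" for la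
  proof -
    have "la \<in> h ` X" using sub that by blast
    then obtain x where "x \<in> X" "la = h x" by blast
    then show ?thesis using P by simp
  qed
  show "okc n (coef X w h)"
    unfolding okc_def using finite_subset[OF sub finite_imageI[OF fin]] pl by blast
  have "(\<Sum>x\<in>X. of_int (w x) * schur n (h x)) = (\<Sum>mu\<in>h ` X. \<Sum>x\<in>{x \<in> X. h x = mu}. of_int (w x) * schur n (h x))"
    by (rule sum.image_gen[OF fin])
  also have "\<dots> = (\<Sum>mu\<in>h ` X. of_int (coef X w h mu) * schur n mu)"
    by (intro sum.cong refl) (simp add: coef_def sum_distrib_right)
  also have "\<dots> = (\<Sum>mu\<in>{mu. coef X w h mu \<noteq> 0}. of_int (coef X w h mu) * schur n mu)"
    by (rule sum.mono_neutral_right[OF finite_imageI[OF fin] sub]) simp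
  finally show "(\<Sum>x\<in>X. of_int (w x) * schur n (h x)) = SE n (coef X w h)" by (simp add: SE_def)
qed

lemma coeffs_expand:
  assumes fin: "finite X" and P: "\<And>x. x \<in> X \<Longrightarrow> h x \<in> partitions_le n"
  shows "schur_coeffs n (\<Sum>x\<in>X. of_int (w x) * schur n (h x)) = coef X w h"
  using schur_coeffs_eq[OF regroup(1)[OF fin P] regroup(2)[OF fin P]] .

lemma alt_repeat2:
  assumes "i < n" "j < n" "i \<noteq> j" "lk g i = lk g j"
  shows "alt n g = 0"
proof -
  let ?t = "Transposition.transpose i j"
  have t: "?t \<in> Perms n" using assms by (simp add: Perms_def permutes_swap_id)
  have "mk ?t g = g"
    by (rule poly_mapping_eqI) (use assms in \<open>simp add: map_key.rep_eq[OF inj_transpose] transpose_def\<close>)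
  have "alt n (mk ?t g) = of_int (sign ?t) * alt n g" by (rule alt_mk[OF t])
  then have "alt n g = of_int (sign ?t) * alt n g" unfolding \<open>mk ?t g = g\<close> .
  also have "\<dots> = - alt n g" using assms by (simp add: sign_swap_id)
  finally show ?thesis by (rule two_zero)
qed

lemma span_term:
  assumes keys: "Poly_Mapping.keys b \<subseteq> {..<n}"
  shows "\<exists>e mu. mu \<in> partitions_le n \<and> alt n (delta n + b) = of_int e * alt n (delta n + pvec mu)"
proof (cases "\<exists>i j. i < n \<and> j < n \<and> i \<noteq> j \<and> lk (delta n + b) i = lk (delta n + b) j")
  case True
  then have "alt n (delta n + b) = 0" using alt_repeat2 by blast
  moreover have "[] \<in> partitions_le n" by (simp add: partitions_le_def partition_def)
  ultimately show ?thesis by (intro exI[of _ 0] exI[of _ "[]"]) simp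
next
  case False
  let ?g = "delta n + b"
  have inj: "lk ?g i \<noteq> lk ?g j" if "i < n" "j < n" "i \<noteq> j" for i j using False that by blast
  obtain s where s: "s \<in> Perms n" "sdec n (mk s ?g)" using sort_perm[OF inj] by blast
  have sp: "s permutes {..<n}" using s by (simp add: Perms_def)
  let ?e = "mk s ?g"
  have le: "lk ?e i = lk ?g (s i)" for i by (simp add: map_key.rep_eq[OF permutes_inj[OF sp]])
  have out: "lk ?e i = 0" if "n \<le> i" for i
  proof -
    have "s i = i" using permutes_not_in[OF sp] that by simp
    moreover have "lk b i = 0" using keys that by (auto simp: in_keys_iff)
    ultimately show ?thesis using that by (simp add: le lookup_add lookup_delta)
  qed
  have ge: "lk (delta n) i \<le> lk ?e i" if "i < n" for i
    using that
  proof (induction "n - i" arbitrary: i)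
    case 0 then show ?case by simp
  next
    case (Suc m)
    show ?case
    proof (cases "Suc i < n")
      case True
      then have "lk (delta n) (Suc i) \<le> lk ?e (Suc i)" using Suc.hyps(1)[of "Suc i"] Suc.hyps(2) by simp
      moreover have "lk ?e (Suc i) < lk ?e i" using s(2) True unfolding sdec_def by simp
      ultimately show ?thesis using True by (simp add: lookup_delta)
    next
      case False
      then show ?thesis using Suc.prems by (simp add: lookup_delta)
    qed
  qed
  define v where "v = Abs_poly_mapping (\<lambda>i. lk ?e i - lk (delta n) i)"
  have lv: "lk v i = lk ?e i - lk (delta n) i" for i
  proof -
    have "{i. lk ?e i - lk (delta n) i \<noteq> 0} \<subseteq> Poly_Mapping.keys ?e" by (auto simp: in_keys_iff)
    then have "finite {i. lk ?e i - lk (delta n) i \<noteq> 0}" by (rule finite_subset) (rule finite_keys)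
    then show ?thesis unfolding v_def by (simp add: Abs_poly_mapping_inverse)
  qed
  have ev: "?e = delta n + v"
  proof (rule poly_mapping_eqI)
    fix i show "lk ?e i = lk (delta n + v) i"
    proof (cases "i < n")
      case True then show ?thesis using ge[OF True] by (simp add: lookup_add lv)
    next
      case False then show ?thesis using out[of i] by (simp add: lookup_add lv lookup_delta)
    qed
  qed
  have "\<exists>mu \<in> partitions_le n. pvec mu = v"
  proof (rule vec_to_part)
    fix i assume i: "Suc i < n"
    have "lk ?e (Suc i) < lk ?e i" using s(2) i unfolding sdec_def by simp
    then show "lk v (Suc i) \<le> lk v i" using i by (simp add: lv lookup_delta)
  next
    fix i assume "n \<le> i" then show "lk v i = 0" using out[of i] by (simp add: lv)
  qed
  then obtain mu where mu: "mu \<in> partitions_le n" "pvec mu = v" by blast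
  have "alt n ?e = of_int (sign s) * alt n ?g" by (rule alt_mk[OF s(1)])
  then have "of_int (sign s) * alt n ?e = of_int (sign s) * (of_int (sign s) * alt n ?g)" by simp
  also have "\<dots> = of_int (sign s * sign s) * alt n ?g" by (simp only: of_int_mult mult.assoc)
  also have "\<dots> = alt n ?g" by simp
  finally have "of_int (sign s) * alt n ?e = alt n ?g" .
  then have "alt n ?g = of_int (sign s) * alt n (delta n + pvec mu)" using mu(2) ev by simp
  then show ?thesis using mu(1) by blast
qed

lemma spanning:
  assumes g: "symmetric_poly n g"
  shows "\<exists>c. okc n c \<and> g = SE n c"
proof -
  have keys: "Poly_Mapping.keys b \<subseteq> {..<n}" if "b \<in> Poly_Mapping.keys g" for b
    using g that by (simp add: symmetric_poly_def)
  have "\<forall>b\<in>Poly_Mapping.keys g. \<exists>em. snd em \<in> partitions_le n \<and>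
      alt n (delta n + b) = of_int (fst em) * alt n (delta n + pvec (snd em))"
  proof
    fix b assume "b \<in> Poly_Mapping.keys g"
    then obtain e mu where "mu \<in> partitions_le n" "alt n (delta n + b) = of_int e * alt n (delta n + pvec mu)"
      using span_term[OF keys] by blast
    then show "\<exists>em. snd em \<in> partitions_le n \<and>
      alt n (delta n + b) = of_int (fst em) * alt n (delta n + pvec (snd em))"
      by (intro exI[of _ "(e, mu)"]) simp
  qed
  then obtain EM where EM0: "\<forall>b\<in>Poly_Mapping.keys g. snd (EM b) \<in> partitions_le n \<and>
      alt n (delta n + b) = of_int (fst (EM b)) * alt n (delta n + pvec (snd (EM b)))"
    by (rule bchoice[elim_format]) blast
  have EM: "snd (EM b) \<in> partitions_le n \<and>
      alt n (delta n + b) = of_int (fst (EM b)) * alt n (delta n + pvec (snd (EM b)))"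
    if "b \<in> Poly_Mapping.keys g" for b using EM0 that by blast
  let ?X = "Poly_Mapping.keys g"
  let ?w = "\<lambda>b. lk g b * fst (EM b)" and ?h = "\<lambda>b. snd (EM b)"
  have P: "\<And>b. b \<in> ?X \<Longrightarrow> ?h b \<in> partitions_le n" using EM by blast
  have "alt n (delta n) * g = (\<Sum>b\<in>?X. of_int (lk g b) * alt n (delta n + b))"
    by (rule alt_mult_sym[OF g])
  also have "\<dots> = (\<Sum>b\<in>?X. of_int (?w b) * (alt n (delta n) * schur n (?h b)))"
  proof (intro sum.cong refl)
    fix b assume b: "b \<in> ?X"
    have "alt n (delta n) * schur n (?h b) = alt n (delta n + pvec (?h b))"
      using bialt[OF part_sorted[OF P[OF b]] part_len[OF P[OF b]]] .
    then show "of_int (lk g b) * alt n (delta n + b) = of_int (?w b) * (alt n (delta n) * schur n (?h b))"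
      using EM[OF b] by (simp add: of_int_mult)
  qed
  also have "\<dots> = alt n (delta n) * (\<Sum>b\<in>?X. of_int (?w b) * schur n (?h b))"
    by (simp add: sum_distrib_left mult.left_commute)
  finally have geq: "g = (\<Sum>b\<in>?X. of_int (?w b) * schur n (?h b))" by (rule alt_delta_cancel)
  note r = regroup[where X = "Poly_Mapping.keys g" and h = "\<lambda>b. snd (EM b)" and w = "\<lambda>b. lk g b * fst (EM b)", OF finite_keys P]
  show ?thesis
  proof (intro exI conjI)
    show "okc n (coef ?X ?w ?h)" by (rule r(1))
    show "g = SE n (coef ?X ?w ?h)" using geq r(2) by simp
  qed
qed


lemma sorted_rep: "sorted_wrt (\<ge>) (replicate r (1::nat))"
  by (induction r) auto

lemma col_key_le1:
  assumes "b \<in> Poly_Mapping.keys (schur n (replicate r 1))"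
  shows "lk b i \<le> 1"
proof -
  let ?la = "replicate r (1::nat)"
  obtain T where T: "T \<in> ssyt n ?la" "b = tableau_content ?la T" using assms keys_schur_img by blast
  have "{c \<in> cells ?la. T c = i} = {c \<in> cells ?la. snd c = 0 \<and> T c = i}"
    by (auto simp: cells_iff)
  then have "cnt ?la T i = colc ?la T 0 i" by (simp add: cnt_def colc_def)
  then show ?thesis using colc_le1[OF T(1) sorted_rep] T(2) by (simp add: lookup_content)
qed

lemma adapted_step:
  assumes ad: "adapted (m + 1) mu" and pr: "\<forall>i<length la. i < length mu \<and> mu ! i \<le> la ! i + 1"
  shows "adapted m la"
  unfolding adapted_def
proof (intro allI impI)
  fix i assume i: "i < length la"
  then have "i < length mu" "mu ! i \<le> la ! i + 1" using pr by auto
  moreover have "int (mu ! i) > int (m + 1) - int (i + 1)" using ad \<open>i < length mu\<close> by (simp add: adapted_def)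
  ultimately show "int (la ! i) > int m - int (i + 1)" by linarith
qed

lemma pieri_term:
  assumes la: "la \<in> partitions_le n" and keys: "Poly_Mapping.keys b \<subseteq> {..<n}" and le1: "\<And>i. lk b i \<le> 1"
  shows "\<exists>e mu. mu \<in> partitions_le n \<and> (\<forall>i<length la. i < length mu \<and> mu ! i \<le> la ! i + 1) \<and>
    alt n (delta n + pvec la + b) = of_int e * alt n (delta n + pvec mu)"
proof -
  let ?g = "delta n + pvec la + b"
  have s: "sorted_wrt (\<ge>) la" by (rule part_sorted[OF la])
  have pv: "lk (pvec la) (Suc i) \<le> lk (pvec la) i" for i
    using sorted_wrt_nth_less[OF s, of i "Suc i"] by (auto simp: lookup_pvec)
  have mono: "lk ?g (Suc i) \<le> lk ?g i" if "Suc i < n" for i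
    using pv[of i] le1[of "Suc i"] that by (simp add: lookup_add lookup_delta)
  show ?thesis
  proof (cases "\<exists>i. Suc i < n \<and> lk ?g i = lk ?g (Suc i)")
    case True
    then obtain i where i: "Suc i < n" "lk ?g i = lk ?g (Suc i)" by blast
    have "alt n ?g = 0" by (rule alt_repeat2[of i n "Suc i"]) (use i in auto)
    moreover have "\<forall>i<length la. i < length la \<and> la ! i \<le> la ! i + 1" by simp
    ultimately show ?thesis using la by (intro exI[of _ 0] exI[of _ la]) simp
  next
    case False
    then have strict: "lk ?g (Suc i) < lk ?g i" if "Suc i < n" for i
      using mono[OF that] that by (metis le_neq_implies_less)
    let ?v = "pvec la + b"
    have "\<exists>mu \<in> partitions_le n. pvec mu = ?v"
    proof (rule vec_to_part)
      fix i assume i: "Suc i < n"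
      show "lk ?v (Suc i) \<le> lk ?v i" using strict[OF i] i by (simp add: lookup_add lookup_delta)
    next
      fix i assume i: "n \<le> i"
      have "lk (pvec la) i = 0" using part_len[OF la] i by (simp add: lookup_pvec)
      moreover have "lk b i = 0" using keys i by (auto simp: in_keys_iff)
      ultimately show "lk ?v i = 0" by (simp add: lookup_add)
    qed
    then obtain mu where mu: "mu \<in> partitions_le n" "pvec mu = ?v" by blast
    have pr: "\<forall>i<length la. i < length mu \<and> mu ! i \<le> la ! i + 1"
    proof (intro allI impI)
      fix i assume i: "i < length la"
      have pos: "0 < la ! i" using partition_pos[OF part_part[OF la] i] .
      have eq: "lk (pvec mu) i = la ! i + lk b i" using mu(2) i by (simp add: lookup_add lookup_pvec)
      have "i < length mu"
      proof (rule ccontr)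
        assume "\<not> i < length mu"
        then have "lk (pvec mu) i = 0" by (simp add: lookup_pvec)
        then show False using eq pos by simp
      qed
      moreover have "mu ! i = la ! i + lk b i" using eq \<open>i < length mu\<close> by (simp add: lookup_pvec)
      ultimately show "i < length mu \<and> mu ! i \<le> la ! i + 1" using le1[of i] by simp
    qed
    have "?g = delta n + pvec mu" using mu(2) by (simp add: add.assoc)
    then show ?thesis using mu(1) pr by (intro exI[of _ 1] exI[of _ mu]) simp
  qed
qed

lemma pieri:
  assumes la: "la \<in> partitions_le n"
  shows "\<exists>w h. (\<forall>x\<in>Poly_Mapping.keys (schur n (replicate r 1)). h x \<in> partitions_le n \<and>
      (\<forall>i<length la. i < length (h x) \<and> h x ! i \<le> la ! i + 1)) \<and>
    schur n la * schur n (replicate r 1) =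
      (\<Sum>x\<in>Poly_Mapping.keys (schur n (replicate r 1)). of_int (w x) * schur n (h x))"
proof -
  let ?E = "schur n (replicate r 1)"
  let ?K = "Poly_Mapping.keys ?E"
  have symE: "symmetric_poly n ?E" by (rule symmetric_schur[OF sorted_rep])
  have "\<forall>b\<in>?K. \<exists>em. snd em \<in> partitions_le n \<and> (\<forall>i<length la. i < length (snd em) \<and> snd em ! i \<le> la ! i + 1) \<and>
      alt n (delta n + pvec la + b) = of_int (fst em) * alt n (delta n + pvec (snd em))"
  proof
    fix b assume b: "b \<in> ?K"
    have kb: "Poly_Mapping.keys b \<subseteq> {..<n}" by (rule keys_schur[OF b])
    obtain e mu where "mu \<in> partitions_le n" "\<forall>i<length la. i < length mu \<and> mu ! i \<le> la ! i + 1"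
      "alt n (delta n + pvec la + b) = of_int e * alt n (delta n + pvec mu)"
      using pieri_term[OF la kb col_key_le1[OF b]] by blast
    then show "\<exists>em. snd em \<in> partitions_le n \<and> (\<forall>i<length la. i < length (snd em) \<and> snd em ! i \<le> la ! i + 1) \<and>
      alt n (delta n + pvec la + b) = of_int (fst em) * alt n (delta n + pvec (snd em))"
      by (intro exI[of _ "(e, mu)"]) simp
  qed
  then obtain EM where EM0: "\<forall>b\<in>?K. snd (EM b) \<in> partitions_le n \<and>
      (\<forall>i<length la. i < length (snd (EM b)) \<and> snd (EM b) ! i \<le> la ! i + 1) \<and>
      alt n (delta n + pvec la + b) = of_int (fst (EM b)) * alt n (delta n + pvec (snd (EM b)))"
    by (rule bchoice[elim_format]) blast
  let ?w = "\<lambda>b. lk ?E b * fst (EM b)" and ?h = "\<lambda>b. snd (EM b)"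
  have P: "?h b \<in> partitions_le n" if "b \<in> ?K" for b using EM0 that by blast
  have "alt n (delta n) * (schur n la * ?E) = alt n (delta n + pvec la) * ?E"
    using bialt[OF part_sorted[OF la] part_len[OF la]] by (simp add: mult.assoc[symmetric])
  also have "\<dots> = (\<Sum>b\<in>?K. of_int (lk ?E b) * alt n (delta n + pvec la + b))"
    by (rule alt_mult_sym[OF symE])
  also have "\<dots> = (\<Sum>b\<in>?K. of_int (?w b) * (alt n (delta n) * schur n (?h b)))"
  proof (intro sum.cong refl)
    fix b assume b: "b \<in> ?K"
    have "alt n (delta n) * schur n (?h b) = alt n (delta n + pvec (?h b))"
      using bialt[OF part_sorted[OF P[OF b]] part_len[OF P[OF b]]] .
    moreover have "alt n (delta n + pvec la + b) = of_int (fst (EM b)) * alt n (delta n + pvec (?h b))"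
      using EM0 b by blast
    ultimately show "of_int (lk ?E b) * alt n (delta n + pvec la + b) = of_int (?w b) * (alt n (delta n) * schur n (?h b))"
      by (simp add: of_int_mult)
  qed
  also have "\<dots> = alt n (delta n) * (\<Sum>b\<in>?K. of_int (?w b) * schur n (?h b))"
    by (simp add: sum_distrib_left mult.left_commute)
  finally have eq: "schur n la * ?E = (\<Sum>b\<in>?K. of_int (?w b) * schur n (?h b))" by (rule alt_delta_cancel)
  show ?thesis
  proof (intro exI conjI)
    show "\<forall>x\<in>?K. ?h x \<in> partitions_le n \<and> (\<forall>i<length la. i < length (?h x) \<and> ?h x ! i \<le> la ! i + 1)"
      using EM0 by blast
  qed (rule eq)
qed


lemma C_op_SE:
  assumes "okc n c"
  shows "C_op n m (SE n c) = (\<Sum>la\<in>{la. c la \<noteq> 0 \<and> adapted m la}. of_int (c la) * schur n la)"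
  unfolding C_op_def schur_coeffs_eq[OF assms refl] ..

lemma C_op_coef:
  assumes fin: "finite X" and P: "\<And>x. x \<in> X \<Longrightarrow> h x \<in> partitions_le n"
  shows "C_op n m (\<Sum>x\<in>X. of_int (w x) * schur n (h x))
    = (\<Sum>mu\<in>{mu. coef X w h mu \<noteq> 0 \<and> adapted m mu}. of_int (coef X w h mu) * schur n mu)"
proof -
  have e: "schur_coeffs n (\<Sum>x\<in>X. of_int (w x) * schur n (h x)) = coef X w h"
    by (rule coeffs_expand[OF fin P])
  show ?thesis unfolding C_op_def e ..
qed

theorem lemma5p3:
  fixes n m r :: nat and g :: ipoly
  assumes "symmetric_poly n g" and "r \<le> n"
  shows "C_op n (m + 1) (g * schur n (replicate r 1))
       = C_op n (m + 1) (C_op n m g * schur n (replicate r 1))"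
proof -
  let ?E = "schur n (replicate r 1)"
  let ?K = "Poly_Mapping.keys ?E"
  obtain c where ok: "okc n c" and g: "g = SE n c" using spanning[OF assms(1)] by blast
  let ?L = "{la. c la \<noteq> 0}"
  let ?Lm = "{la. c la \<noteq> 0 \<and> adapted m la}"
  have finL: "finite ?L" using ok by (simp add: okc_def)
  have finLm: "finite ?Lm" by (rule finite_subset[OF _ finL]) auto
  have PL: "la \<in> partitions_le n" if "la \<in> ?L" for la using ok that by (simp add: okc_def)
  have "\<forall>la\<in>?L. \<exists>wh. (\<forall>x\<in>?K. snd wh x \<in> partitions_le n \<and>
      (\<forall>i<length la. i < length (snd wh x) \<and> snd wh x ! i \<le> la ! i + 1)) \<and>
    schur n la * ?E = (\<Sum>x\<in>?K. of_int (fst wh x) * schur n (snd wh x))"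
  proof
    fix la assume "la \<in> ?L"
    then obtain w h where "(\<forall>x\<in>?K. h x \<in> partitions_le n \<and>
        (\<forall>i<length la. i < length (h x) \<and> h x ! i \<le> la ! i + 1)) \<and>
      schur n la * ?E = (\<Sum>x\<in>?K. of_int (w x) * schur n (h x))"
      using pieri[OF PL, of la r] by blast
    then show "\<exists>wh. (\<forall>x\<in>?K. snd wh x \<in> partitions_le n \<and>
      (\<forall>i<length la. i < length (snd wh x) \<and> snd wh x ! i \<le> la ! i + 1)) \<and>
      schur n la * ?E = (\<Sum>x\<in>?K. of_int (fst wh x) * schur n (snd wh x))"
      by (intro exI[of _ "(w, h)"]) simp
  qed
  then obtain WH where WH: "\<forall>la\<in>?L. (\<forall>x\<in>?K. snd (WH la) x \<in> partitions_le n \<and>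
      (\<forall>i<length la. i < length (snd (WH la) x) \<and> snd (WH la) x ! i \<le> la ! i + 1)) \<and>
    schur n la * ?E = (\<Sum>x\<in>?K. of_int (fst (WH la) x) * schur n (snd (WH la) x))"
    by (rule bchoice[elim_format]) blast
  define ww where "ww p = c (fst p) * fst (WH (fst p)) (snd p)" for p
  define hh where "hh p = snd (WH (fst p)) (snd p)" for p
  have expand: "SE n c' * ?E = (\<Sum>p\<in>{la. c' la \<noteq> 0} \<times> ?K. of_int (ww p) * schur n (hh p))"
    if sub: "\<And>la. c' la \<noteq> 0 \<Longrightarrow> la \<in> ?L \<and> c' la = c la" and finc: "finite {la. c' la \<noteq> 0}" for c'
  proof -
    have "SE n c' * ?E = (\<Sum>la\<in>{la. c' la \<noteq> 0}. of_int (c' la) * (schur n la * ?E))"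
      unfolding SE_def sum_distrib_right by (simp add: mult.assoc)
    also have "\<dots> = (\<Sum>la\<in>{la. c' la \<noteq> 0}. \<Sum>x\<in>?K. of_int (ww (la, x)) * schur n (hh (la, x)))"
    proof (intro sum.cong refl)
      fix la assume la: "la \<in> {la. c' la \<noteq> 0}"
      then have laL: "la \<in> ?L" and cc: "c' la = c la" using sub by auto
      have "schur n la * ?E = (\<Sum>x\<in>?K. of_int (fst (WH la) x) * schur n (snd (WH la) x))"
        using WH laL by blast
      then show "of_int (c' la) * (schur n la * ?E) = (\<Sum>x\<in>?K. of_int (ww (la, x)) * schur n (hh (la, x)))"
        by (simp add: sum_distrib_left ww_def hh_def cc of_int_mult mult.assoc)
    qed
    also have "\<dots> = (\<Sum>p\<in>{la. c' la \<noteq> 0} \<times> ?K. of_int (ww p) * schur n (hh p))"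
      by (simp add: sum.cartesian_product split_def)
    finally show ?thesis .
  qed
  have PP: "hh p \<in> partitions_le n" if "p \<in> ?L \<times> ?K" for p
    using WH that unfolding hh_def by (cases p) auto
  have PPm: "hh p \<in> partitions_le n" if "p \<in> ?Lm \<times> ?K" for p using PP that by auto
  have finA: "finite (?L \<times> ?K)" using finL by simp
  have finB: "finite (?Lm \<times> ?K)" using finLm by simp
  have lhs: "g * ?E = (\<Sum>p\<in>?L \<times> ?K. of_int (ww p) * schur n (hh p))"
    unfolding g by (rule expand) (use finL in auto)
  let ?cm = "\<lambda>la. if adapted m la then c la else 0"
  have cmset: "{la. ?cm la \<noteq> 0} = ?Lm" by auto
  have Cg0: "C_op n m g = (\<Sum>la\<in>?Lm. of_int (c la) * schur n la)"
    using C_op_SE[OF ok, of m] g by simp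
  have Cg: "C_op n m g = SE n ?cm"
    unfolding Cg0 SE_def cmset by (intro sum.cong refl) simp
  have rhs: "C_op n m g * ?E = (\<Sum>p\<in>?Lm \<times> ?K. of_int (ww p) * schur n (hh p))"
    unfolding Cg using expand[of ?cm] finLm cmset by (auto split: if_splits)
  have coef_eq: "coef (?L \<times> ?K) ww hh mu = coef (?Lm \<times> ?K) ww hh mu" if ad: "adapted (m + 1) mu" for mu
  proof -
    have "{p \<in> ?L \<times> ?K. hh p = mu} = {p \<in> ?Lm \<times> ?K. hh p = mu}"
    proof
      show "{p \<in> ?L \<times> ?K. hh p = mu} \<subseteq> {p \<in> ?Lm \<times> ?K. hh p = mu}"
      proof
        fix p assume p: "p \<in> {p \<in> ?L \<times> ?K. hh p = mu}"
        obtain la x where px: "p = (la, x)" by (cases p)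
        have la: "la \<in> ?L" and x: "x \<in> ?K" and hm: "snd (WH la) x = mu" using p px by (auto simp: hh_def)
        have "\<forall>i<length la. i < length (snd (WH la) x) \<and> snd (WH la) x ! i \<le> la ! i + 1"
          using WH la x by blast
        then have "adapted m la" using adapted_step[OF ad] hm by simp
        then show "p \<in> {p \<in> ?Lm \<times> ?K. hh p = mu}" using p px la by auto
      qed
    qed auto
    then show ?thesis by (simp add: coef_def)
  qed
  have "C_op n (m + 1) (g * ?E)
      = (\<Sum>mu\<in>{mu. coef (?L \<times> ?K) ww hh mu \<noteq> 0 \<and> adapted (m + 1) mu}. of_int (coef (?L \<times> ?K) ww hh mu) * schur n mu)"
    unfolding lhs by (rule C_op_coef[OF finA PP])
  also have "\<dots> = (\<Sum>mu\<in>{mu. coef (?Lm \<times> ?K) ww hh mu \<noteq> 0 \<and> adapted (m + 1) mu}. of_int (coef (?Lm \<times> ?K) ww hh mu) * schur n mu)"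
  proof -
    have "{mu. coef (?L \<times> ?K) ww hh mu \<noteq> 0 \<and> adapted (m + 1) mu} = {mu. coef (?Lm \<times> ?K) ww hh mu \<noteq> 0 \<and> adapted (m + 1) mu}"
      using coef_eq by auto
    then show ?thesis using coef_eq by (intro sum.cong) auto
  qed
  also have "\<dots> = C_op n (m + 1) (C_op n m g * ?E)"
    unfolding rhs by (rule C_op_coef[OF finB PPm, symmetric])
  finally show ?thesis .
qed


end
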